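(* Let $\Sigma$ be a planar model. For any $\varepsilon,C,\rho>0$ there exists $N_\varepsilon=N(\varepsilon,C,\rho)$ such that: if $\omega\in\Omega$ and $k\in\mathbb N$ are such that $\eta^{(T^{k'(\omega)}\omega)}$ is $(C,\rho)$-Frostman on tubes, and $n=k'(\omega)+N_\varepsilon$, then $$\mathbf P_{i=k}\big(d_{TV}(\eta^{(\omega)}_{x,i},\ \eta^{(\omega)}_{n,[x,i]})<\varepsilon\big)>1-\varepsilon,$$ where $d_{TV}$ is the total variation distance.
   Context: Planar model $\Sigma$: $I$ finite; $f^{(i)}_j(z)=\lambda_iz+t^{(i)}_j$, $\lambda_i=r_i\varphi_i$, $0<r_i<1$; positive probability vectors $p_i$; $\Omega=I^{\mathbb N}$, $T$ the shift. For $u\in\mathbb X^{(\omega)}_n=\prod_{j\le n}\{1,\dots,k_{\omega_j}\}$, $f^{(\omega)}_u=f^{(\omega_1)}_{u_1}\circ\dots\circ f^{(\omega_n)}_{u_n}$, $p^{(\omega)}_u=\prod_jp^{(\omega_j)}_{u_j}$. $\eta^{(\omega)}$ is the law of $\sum_{n\ge1}(\prod_{j<n}\lambda_{\omega_j})t^{(\omega_n)}_{u_n}$, $u_n$ independent with laws $p_{\omega_n}$. Fix $R>0$ with $\overline{f^{(i)}_j(B(0,R))}\subset B(0,R)$ and $2R\min r_i>1/2$; $B^{(\omega)}_u=f^{(\omega)}_u(B(0,R))$; $k'(\omega)$ is the natural number with $2R\prod_{i=1}^{k'}r_{\omega_i}\le2^{-k}\le2R\prod_{i=1}^{k'-1}r_{\omega_i}$.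 Raw component: $\mu_{x,i}=\mu|_D/\mu(D)$ for $D=D_i(x)$ the dyadic square of side $2^{-i}$ containing $x$; $\mathbf P_{i=k}(\mu_{x,i}\in A)=\mu(\{x:\mu_{x,k}\in A\})$. Truncated component: for $D\in\mathcal D_k$ and $n>k$, $\eta^{(\omega)}_{n,[D]}=Z^{-1}\sum_{u\in\mathbb X^{(\omega)}_n,\ B^{(\omega)}_u\subset D}p^{(\omega)}_uf^{(\omega)}_u\eta^{(T^n\omega)}$ with $Z$ normalizing, and $\eta^{(\omega)}_{n,[x,k]}=\eta^{(\omega)}_{n,[D_k(x)]}$. $\mu$ is $(C,\rho)$-Frostman on tubes if $\mu(B(W+x,r))\le Cr^\rho$ for all lines $W$ through $0$, $x\in\mathbb R^2$, $r>0$. *)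

theory Defs
  imports "HOL-Probability.Probability"
begin

text \<open>For each i the IFS has maps
  f^(i)_j(z) = lam i * z + t i j, for j < kk i (digits are 0-based naturals).
  Sequences omega in Omega = I^N are functions nat => 'i, with omega 0 playing
  the role of omega_1.\<close>

definition fmap :: "('i \<Rightarrow> complex) \<Rightarrow> ('i \<Rightarrow> nat \<Rightarrow> complex) \<Rightarrow> 'i \<Rightarrow> nat \<Rightarrow> complex \<Rightarrow> complex" where
  "fmap lam t i j z = lam i * z + t i j"

definition planar_model ::
  "('i::finite \<Rightarrow> nat) \<Rightarrow> ('i \<Rightarrow> complex) \<Rightarrow> ('i \<Rightarrow> nat \<Rightarrow> complex) \<Rightarrow> ('i \<Rightarrow> nat \<Rightarrow> real) \<Rightarrow> real \<Rightarrow> bool" where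
  "planar_model kk lam t p R \<longleftrightarrow>
     (\<forall>i. kk i \<ge> 1) \<and>
     (\<forall>i. 0 < norm (lam i) \<and> norm (lam i) < 1) \<and>
     (\<forall>i. (\<forall>j<kk i. p i j > 0) \<and> (\<Sum>j<kk i. p i j) = 1) \<and>
     R > 0 \<and>
     (\<forall>i. \<forall>j<kk i. closure (fmap lam t i j ` ball 0 R) \<subseteq> ball 0 R) \<and>
     (\<forall>i. 2 * R * norm (lam i) > 1/2)"

definition shiftn :: "nat \<Rightarrow> (nat \<Rightarrow> 'i) \<Rightarrow> (nat \<Rightarrow> 'i)" where
  "shiftn n \<omega> = (\<lambda>j. \<omega> (j + n))"

definition digit_pmf :: "('i \<Rightarrow> nat) \<Rightarrow> ('i \<Rightarrow> nat \<Rightarrow> real) \<Rightarrow> 'i \<Rightarrow> nat pmf" where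
  "digit_pmf kk p i = embed_pmf (\<lambda>j. if j < kk i then p i j else 0)"

definition eta :: "('i \<Rightarrow> nat) \<Rightarrow> ('i \<Rightarrow> complex) \<Rightarrow> ('i \<Rightarrow> nat \<Rightarrow> complex) \<Rightarrow> ('i \<Rightarrow> nat \<Rightarrow> real)
     \<Rightarrow> (nat \<Rightarrow> 'i) \<Rightarrow> complex measure" where
  "eta kk lam t p \<omega> =
     distr (\<Pi>\<^sub>M m\<in>UNIV. measure_pmf (digit_pmf kk p (\<omega> m))) borel
       (\<lambda>u. \<Sum>m. (\<Prod>j<m. lam (\<omega> j)) * t (\<omega> m) (u m))"

definition words :: "('i \<Rightarrow> nat) \<Rightarrow> (nat \<Rightarrow> 'i) \<Rightarrow> nat \<Rightarrow> nat list set" where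
  "words kk \<omega> n = {u. length u = n \<and> (\<forall>j<n. u ! j < kk (\<omega> j))}"

fun fword :: "('i \<Rightarrow> complex) \<Rightarrow> ('i \<Rightarrow> nat \<Rightarrow> complex) \<Rightarrow> (nat \<Rightarrow> 'i) \<Rightarrow> nat list \<Rightarrow> complex \<Rightarrow> complex" where
  "fword lam t \<omega> [] = id"
| "fword lam t \<omega> (a # u) = fmap lam t (\<omega> 0) a \<circ> fword lam t (shiftn 1 \<omega>) u"

fun pword :: "('i \<Rightarrow> nat \<Rightarrow> real) \<Rightarrow> (nat \<Rightarrow> 'i) \<Rightarrow> nat list \<Rightarrow> real" where
  "pword p \<omega> [] = 1"
| "pword p \<omega> (a # u) = p (\<omega> 0) a * pword p (shiftn 1 \<omega>) u"

text \<open>D_i(x): the half-open dyadic square of side 2^-i containing x.\<close>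
definition dyadic :: "nat \<Rightarrow> complex \<Rightarrow> complex set" where
  "dyadic i x = {z. \<lfloor>2 ^ i * Re z\<rfloor> = \<lfloor>(2::real) ^ i * Re x\<rfloor> \<and>
                     \<lfloor>2 ^ i * Im z\<rfloor> = \<lfloor>(2::real) ^ i * Im x\<rfloor>}"

definition raw_comp :: "complex measure \<Rightarrow> nat \<Rightarrow> complex \<Rightarrow> complex measure" where
  "raw_comp \<mu> i x = uniform_measure \<mu> (dyadic i x)"

definition trunc_sq :: "('i \<Rightarrow> nat) \<Rightarrow> ('i \<Rightarrow> complex) \<Rightarrow> ('i \<Rightarrow> nat \<Rightarrow> complex) \<Rightarrow> ('i \<Rightarrow> nat \<Rightarrow> real)
     \<Rightarrow> real \<Rightarrow> (nat \<Rightarrow> 'i) \<Rightarrow> nat \<Rightarrow> complex set \<Rightarrow> complex measure" where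
  "trunc_sq kk lam t p R \<omega> n D =
    (let S = {u \<in> words kk \<omega> n. fword lam t \<omega> u ` ball 0 R \<subseteq> D};
         Z = (\<Sum>u\<in>S. pword p \<omega> u)
     in measure_of UNIV (sets borel)
          (\<lambda>A. (\<Sum>u\<in>S. ennreal (pword p \<omega> u) *
                  emeasure (distr (eta kk lam t p (shiftn n \<omega>)) borel (fword lam t \<omega> u)) A)
               / ennreal Z))"

definition trunc_comp :: "('i \<Rightarrow> nat) \<Rightarrow> ('i \<Rightarrow> complex) \<Rightarrow> ('i \<Rightarrow> nat \<Rightarrow> complex) \<Rightarrow> ('i \<Rightarrow> nat \<Rightarrow> real)
     \<Rightarrow> real \<Rightarrow> (nat \<Rightarrow> 'i) \<Rightarrow> nat \<Rightarrow> nat \<Rightarrow> complex \<Rightarrow> complex measure" where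
  "trunc_comp kk lam t p R \<omega> n i x = trunc_sq kk lam t p R \<omega> n (dyadic i x)"

text \<open>k'(omega): the least natural number k' with 2R prod_{j<k'} r_{omega j} <= 2^-k
  (then also 2^-k <= 2R prod_{j<k'-1} r_{omega j} when k' >= 1).\<close>
definition kprime :: "('i \<Rightarrow> complex) \<Rightarrow> real \<Rightarrow> (nat \<Rightarrow> 'i) \<Rightarrow> nat \<Rightarrow> nat" where
  "kprime lam R \<omega> k = (LEAST k'. 2 * R * (\<Prod>j<k'. norm (lam (\<omega> j))) \<le> 1 / 2 ^ k)"

definition tube :: "complex \<Rightarrow> complex \<Rightarrow> real \<Rightarrow> complex set" where
  "tube e x r = {z. \<exists>s::real. dist z (x + of_real s * e) < r}"

definition frostman_tubes :: "complex measure \<Rightarrow> real \<Rightarrow> real \<Rightarrow> bool" where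
  "frostman_tubes \<mu> C \<rho> \<longleftrightarrow>
     (\<forall>e x r. norm e = 1 \<longrightarrow> r > 0 \<longrightarrow> measure \<mu> (tube e x r) \<le> C * r powr \<rho>)"

definition tv_dist :: "'a measure \<Rightarrow> 'a measure \<Rightarrow> real" where
  "tv_dist \<mu> \<nu> = (SUP A\<in>sets \<mu>. \<bar>measure \<mu> A - measure \<nu> A\<bar>)"

end

theory Submission
  imports Defs
begin

lemma measurable_case_nat_PiM:
  fixes M :: "nat \<Rightarrow> 'a measure"
  shows "(\<lambda>(s, \<omega>). case_nat s \<omega>) \<in> measurable (M 0 \<Otimes>\<^sub>M (\<Pi>\<^sub>M i\<in>UNIV. M (Suc i))) (\<Pi>\<^sub>M i\<in>UNIV. M i)"
  proof (rule measurable_PiM_single')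
    fix i :: nat
    show "(\<lambda>x. (case x of (s, \<omega>) \<Rightarrow> case_nat s \<omega>) i) \<in> measurable (M 0 \<Otimes>\<^sub>M (\<Pi>\<^sub>M i\<in>UNIV. M (Suc i))) (M i)"
    proof (cases i)
      case 0 then show ?thesis by (simp add: split_beta')
    next
      case (Suc j)
      have "(\<lambda>x. snd x j) \<in> measurable (M 0 \<Otimes>\<^sub>M (\<Pi>\<^sub>M i\<in>UNIV. M (Suc i))) (M (Suc j))"
        by (rule measurable_compose[OF measurable_snd measurable_component_singleton]) simp
      then show ?thesis using Suc by (simp add: split_beta')
    qed
  qed (auto simp: space_pair_measure space_PiM PiE_iff split: nat.split)

lemma PiM_iter_gen:
  fixes M :: "nat \<Rightarrow> 'a measure"
  assumes MP: "\<And>i. prob_space (M i)"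
  shows "distr (M 0 \<Otimes>\<^sub>M (\<Pi>\<^sub>M i\<in>UNIV. M (Suc i))) (\<Pi>\<^sub>M i\<in>UNIV. M i) (\<lambda>(s, \<omega>). case_nat s \<omega>) = (\<Pi>\<^sub>M i\<in>UNIV. M i)" (is "?D = _")
proof -
  interpret product_prob_space M UNIV using MP by (simp add: product_prob_space_def product_sigma_finite_def prob_space_imp_sigma_finite product_prob_space_axioms_def)
  interpret S: product_prob_space "\<lambda>i. M (Suc i)" UNIV using MP by (simp add: product_prob_space_def product_sigma_finite_def prob_space_imp_sigma_finite product_prob_space_axioms_def)
  interpret M0: prob_space "M 0" by (rule MP)
  interpret PS: pair_sigma_finite "M 0" "\<Pi>\<^sub>M i\<in>UNIV. M (Suc i)" by unfold_locales
  have meas: "(\<lambda>(s, \<omega>). case_nat s \<omega>) \<in> measurable (M 0 \<Otimes>\<^sub>M (\<Pi>\<^sub>M i\<in>UNIV. M (Suc i))) (\<Pi>\<^sub>M i\<in>UNIV. M i)"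
  proof (rule measurable_PiM_single')
    fix i :: nat
    show "(\<lambda>x. (case x of (s, \<omega>) \<Rightarrow> case_nat s \<omega>) i) \<in> measurable (M 0 \<Otimes>\<^sub>M (\<Pi>\<^sub>M i\<in>UNIV. M (Suc i))) (M i)"
    proof (cases i)
      case 0 then show ?thesis by (simp add: split_beta')
    next
      case (Suc j)
      have "(\<lambda>x. snd x j) \<in> measurable (M 0 \<Otimes>\<^sub>M (\<Pi>\<^sub>M i\<in>UNIV. M (Suc i))) (M (Suc j))"
        by (rule measurable_compose[OF measurable_snd measurable_component_singleton]) simp
      then show ?thesis using Suc by (simp add: split_beta')
    qed
  qed (auto simp: space_pair_measure space_PiM PiE_iff split: nat.split)
  show ?thesis
  proof (rule PiM_eq)
  let ?I = "UNIV::nat set"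
  let "distr _ _ ?f" = "?D"
  fix J E assume J: "finite J" "J \<subseteq> ?I" "\<And>j. j \<in> J \<Longrightarrow> E j \<in> sets (M j)"
  let ?X = "prod_emb ?I M J (\<Pi>\<^sub>E j\<in>J. E j)"
  have "\<And>j x. j \<in> J \<Longrightarrow> x \<in> E j \<Longrightarrow> x \<in> space (M j)"
    using J(3)[THEN sets.sets_into_space] by (auto simp: space_PiM Pi_iff subset_eq)
  with J have "?f -` ?X \<inter> space (M 0 \<Otimes>\<^sub>M (\<Pi>\<^sub>M i\<in>UNIV. M (Suc i))) = (if 0 \<in> J then E 0 else space (M 0)) \<times>
    (prod_emb ?I (\<lambda>i. M (Suc i)) (Suc -` J) (\<Pi>\<^sub>E j\<in>Suc -` J. E (Suc j)))" (is "_ = ?E \<times> ?F")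
   by (auto simp: space_pair_measure space_PiM PiE_iff prod_emb_def all_conj_distrib
      split: nat.split nat.split_asm)
  then have "emeasure ?D ?X = emeasure (M 0 \<Otimes>\<^sub>M (\<Pi>\<^sub>M i\<in>UNIV. M (Suc i))) (?E \<times> ?F)"
    by (subst emeasure_distr[OF meas])
       (auto intro!: sets_PiM_I simp: split_beta' J)
  also have "\<dots> = emeasure (M 0) ?E * emeasure (\<Pi>\<^sub>M i\<in>UNIV. M (Suc i)) ?F"
  proof (rule S.emeasure_pair_measure_Times)
    show "?E \<in> sets (M 0)" using J by auto
    show "?F \<in> sets (\<Pi>\<^sub>M i\<in>UNIV. M (Suc i))" using J by (intro sets_PiM_I) (auto intro: finite_vimageI)
  qed
  also have "emeasure (\<Pi>\<^sub>M i\<in>UNIV. M (Suc i)) ?F = (\<Prod>j\<in>Suc -` J. emeasure (M (Suc j)) (E (Suc j)))"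
    using J by (intro S.emeasure_PiM_emb) (simp_all add: finite_vimageI)
  also have "\<dots> = (\<Prod>j\<in>J - {0}. emeasure (M j) (E j))"
    by (rule prod.reindex_cong [of "\<lambda>x. x - 1"])
      (auto simp: image_iff ac_simps intro!: inj_onI bexI[of _ "Suc _"])
  also have "emeasure (M 0) ?E * (\<Prod>j\<in>J - {0}. emeasure (M j) (E j)) = (\<Prod>j\<in>J. emeasure (M j) (E j))"
    by (auto simp: prob_space.emeasure_space_1[OF MP] prod.remove J)
  finally show "emeasure ?D ?X = (\<Prod>j\<in>J. emeasure (M j) (E j))" .
  qed simp_all
qed

locale pm =
  fixes kk :: "'i::finite \<Rightarrow> nat" and lam :: "'i \<Rightarrow> complex"
    and t :: "'i \<Rightarrow> nat \<Rightarrow> complex" and p :: "'i \<Rightarrow> nat \<Rightarrow> real" and R :: real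
  assumes PM: "planar_model kk lam t p R"
begin

lemma kk_pos: "kk i \<ge> 1" using PM by (simp add: planar_model_def)
lemma lam_pos: "0 < norm (lam i)" using PM by (simp add: planar_model_def)
lemma lam_lt1: "norm (lam i) < 1" using PM by (simp add: planar_model_def)
lemma p_pos: "j < kk i \<Longrightarrow> p i j > 0" using PM by (simp add: planar_model_def)
lemma p_sum: "(\<Sum>j<kk i. p i j) = 1" using PM by (simp add: planar_model_def)
lemma R_pos: "R > 0" using PM by (simp add: planar_model_def)
lemma closure_cond: "j < kk i \<Longrightarrow> closure (fmap lam t i j ` ball 0 R) \<subseteq> ball 0 R"
  using PM by (simp add: planar_model_def)

definition rmax :: real where "rmax = Max (range (\<lambda>i. norm (lam i)))"
lemma rmax_ge: "norm (lam i) \<le> rmax" unfolding rmax_def by (rule Max_ge) auto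
lemma rmax_lt1: "rmax < 1" unfolding rmax_def using lam_lt1 by (subst Max_less_iff) auto
lemma rmax_pos: "0 < rmax" using rmax_ge[of undefined] lam_pos[of undefined] by linarith

definition Tmax :: real where "Tmax = (\<Sum>i\<in>UNIV. \<Sum>j<kk i. norm (t i j))"
lemma Tmax_ge: "j < kk i \<Longrightarrow> norm (t i j) \<le> Tmax"
proof -
  assume j: "j < kk i"
  have "norm (t i j) \<le> (\<Sum>j<kk i. norm (t i j))"
    using j by (intro member_le_sum) auto
  also have "\<dots> \<le> Tmax" unfolding Tmax_def
    by (rule member_le_sum[where f="\<lambda>i. \<Sum>j<kk i. norm (t i j)"]) (auto intro: sum_nonneg)
  finally show ?thesis .
qed

lemma pmf_digit: "pmf (digit_pmf kk p i) j = (if j < kk i then p i j else 0)"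
proof -
  have "(\<integral>\<^sup>+ j. ennreal (if j < kk i then p i j else 0) \<partial>count_space UNIV) = (\<integral>\<^sup>+ j. ennreal (p i j) \<partial>count_space {..<kk i})"
    by (subst nn_integral_count_space_indicator) (auto intro!: nn_integral_cong simp: indicator_def)
  also have "\<dots> = (\<Sum>j<kk i. ennreal (p i j))"
    by (subst nn_integral_count_space_finite) auto
  also have "\<dots> = ennreal (\<Sum>j<kk i. p i j)" using p_pos by (subst sum_ennreal) (auto intro: less_imp_le)
  also have "\<dots> = 1" using p_sum by simp
  finally show ?thesis unfolding digit_pmf_def
    by (subst pmf_embed_pmf) (auto simp: less_imp_le[OF p_pos])
qed

lemma set_pmf_digit: "set_pmf (digit_pmf kk p i) = {..<kk i}"
  using p_pos[of _ i] by (force simp: set_pmf_iff pmf_digit split: if_splits)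

definition MM :: "(nat \<Rightarrow> 'i) \<Rightarrow> nat \<Rightarrow> nat measure" where
  "MM \<omega> m = measure_pmf (digit_pmf kk p (\<omega> m))"
definition PP :: "(nat \<Rightarrow> 'i) \<Rightarrow> (nat \<Rightarrow> nat) measure" where
  "PP \<omega> = (\<Pi>\<^sub>M m\<in>UNIV. MM \<omega> m)"
definition trm :: "(nat \<Rightarrow> 'i) \<Rightarrow> (nat \<Rightarrow> nat) \<Rightarrow> nat \<Rightarrow> complex" where
  "trm \<omega> u m = (\<Prod>j<m. lam (\<omega> j)) * t (\<omega> m) (u m)"
definition piw :: "(nat \<Rightarrow> 'i) \<Rightarrow> (nat \<Rightarrow> nat) \<Rightarrow> complex" where
  "piw \<omega> u = (\<Sum>m. trm \<omega> u m)"
definition valid :: "(nat \<Rightarrow> 'i) \<Rightarrow> (nat \<Rightarrow> nat) \<Rightarrow> bool" where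
  "valid \<omega> u \<longleftrightarrow> (\<forall>m. u m < kk (\<omega> m))"

lemma eta_def': "eta kk lam t p \<omega> = distr (PP \<omega>) borel (piw \<omega>)"
  unfolding eta_def PP_def MM_def piw_def trm_def by simp

lemma prob_MM: "prob_space (MM \<omega> m)" unfolding MM_def by (rule prob_space_measure_pmf)
lemma prob_PP: "prob_space (PP \<omega>)" unfolding PP_def by (rule prob_space_PiM) (rule prob_MM)

lemma piw_meas[measurable]: "piw \<omega> \<in> borel_measurable (PP \<omega>)"
proof -
  have "(\<lambda>u. trm \<omega> u m) \<in> borel_measurable (PP \<omega>)" for m
  proof -
    have "(\<lambda>u. u m) \<in> measurable (PP \<omega>) (MM \<omega> m)" unfolding PP_def
      by (rule measurable_component_singleton) simp
    moreover have "(\<lambda>x. (\<Prod>j<m. lam (\<omega> j)) * t (\<omega> m) x) \<in> borel_measurable (MM \<omega> m)"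
      unfolding MM_def by simp
    ultimately show ?thesis unfolding trm_def by (rule measurable_compose)
  qed
  then show ?thesis unfolding piw_def by measurable
qed

lemma prob_eta: "prob_space (eta kk lam t p \<omega>)"
  unfolding eta_def' by (rule prob_space.prob_space_distr[OF prob_PP piw_meas])

lemma sets_eta[simp]: "sets (eta kk lam t p \<omega>) = sets borel"
  unfolding eta_def' by simp
lemma space_eta[simp]: "space (eta kk lam t p \<omega>) = UNIV"
  unfolding eta_def' by simp

lemma term_bound: "valid \<omega> u \<Longrightarrow> norm (trm \<omega> u m) \<le> Tmax * rmax ^ m"
proof -
  assume v: "valid \<omega> u"
  have "norm (\<Prod>j<m. lam (\<omega> j)) = (\<Prod>j<m. norm (lam (\<omega> j)))" by (simp add: prod_norm)
  also have "\<dots> \<le> (\<Prod>j<m. rmax)" by (intro prod_mono) (auto simp: rmax_ge)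
  finally have a: "norm (\<Prod>j<m. lam (\<omega> j)) \<le> rmax ^ m" by simp
  have b: "norm (t (\<omega> m) (u m)) \<le> Tmax" using v by (auto simp: valid_def intro: Tmax_ge)
  have "0 \<le> Tmax" using b norm_ge_zero order_trans by blast
  then show ?thesis unfolding trm_def norm_mult
    using mult_mono[OF b a] by (simp add: mult.commute)
qed

lemma summable_term: "valid \<omega> u \<Longrightarrow> summable (trm \<omega> u)"
proof -
  assume v: "valid \<omega> u"
  have "summable (\<lambda>m. Tmax * rmax ^ m)"
    using rmax_lt1 rmax_pos by (intro summable_mult summable_geometric) auto
  then show ?thesis
    by (rule summable_comparison_test'[where N=0]) (use term_bound[OF v] in auto)
qed

lemma shift1_apply[simp]: "shiftn 1 \<omega> j = \<omega> (Suc j)" by (simp add: shiftn_def)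

lemma valid_shift: "valid \<omega> u \<Longrightarrow> valid (shiftn 1 \<omega>) (\<lambda>m. u (Suc m))"
  by (simp add: valid_def shiftn_def)

lemma piw_step:
  assumes v: "valid \<omega> u"
  shows "piw \<omega> u = fmap lam t (\<omega> 0) (u 0) (piw (shiftn 1 \<omega>) (\<lambda>m. u (Suc m)))"
proof -
  have s: "summable (trm \<omega> u)" by (rule summable_term[OF v])
  have "piw \<omega> u = (\<Sum>m. trm \<omega> u (Suc m)) + trm \<omega> u 0"
    unfolding piw_def using suminf_split_head[OF s] by simp
  also have "(\<lambda>m. trm \<omega> u (Suc m)) = (\<lambda>m. lam (\<omega> 0) * trm (shiftn 1 \<omega>) (\<lambda>m. u (Suc m)) m)"
    by (auto simp: trm_def prod.lessThan_Suc_shift shiftn_def simp del: prod.lessThan_Suc)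
  also have "(\<Sum>m. lam (\<omega> 0) * trm (shiftn 1 \<omega>) (\<lambda>m. u (Suc m)) m) = lam (\<omega> 0) * piw (shiftn 1 \<omega>) (\<lambda>m. u (Suc m))"
    unfolding piw_def by (rule suminf_mult[OF summable_term[OF valid_shift[OF v]]])
  finally show ?thesis by (simp add: fmap_def trm_def)
qed

end

context pm begin

lemma fmap_ball: "j < kk i \<Longrightarrow> z \<in> ball 0 R \<Longrightarrow> fmap lam t i j z \<in> ball 0 R"
proof -
  assume j: "j < kk i" and z: "z \<in> ball 0 R"
  have "fmap lam t i j z \<in> fmap lam t i j ` ball 0 R" using z by (rule imageI)
  then show ?thesis using closure_cond[OF j] closure_subset[of "fmap lam t i j ` ball 0 R"] by blast
qed

lemma continuous_fmap[continuous_intros]: "continuous_on S (fmap lam t i j)"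
  unfolding fmap_def by (intro continuous_intros)

lemma fmap_cball: "j < kk i \<Longrightarrow> z \<in> cball 0 R \<Longrightarrow> fmap lam t i j z \<in> ball 0 R"
proof -
  assume j: "j < kk i" and z: "z \<in> cball 0 R"
  have "fmap lam t i j ` closure (ball 0 R) \<subseteq> closure (fmap lam t i j ` ball 0 R)"
    by (rule image_closure_subset) (auto intro: continuous_fmap closure_subset[THEN subsetD])
  moreover have "z \<in> closure (ball 0 R)" using z R_pos by (simp add: closure_ball)
  ultimately have "fmap lam t i j z \<in> closure (fmap lam t i j ` ball 0 R)" by blast
  then show ?thesis using closure_cond[OF j] by blast
qed

lemma psum_step:
  "(\<Sum>m<Suc n. trm \<omega> u m) = fmap lam t (\<omega> 0) (u 0) (\<Sum>m<n. trm (shiftn 1 \<omega>) (\<lambda>m. u (Suc m)) m)"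
proof -
  have "(\<Sum>m<Suc n. trm \<omega> u m) = trm \<omega> u 0 + (\<Sum>m<n. trm \<omega> u (Suc m))"
    by (rule sum.lessThan_Suc_shift)
  also have "(\<Sum>m<n. trm \<omega> u (Suc m)) = (\<Sum>m<n. lam (\<omega> 0) * trm (shiftn 1 \<omega>) (\<lambda>m. u (Suc m)) m)"
    by (auto simp: trm_def prod.lessThan_Suc_shift shiftn_def simp del: prod.lessThan_Suc intro!: sum.cong)
  finally show ?thesis by (simp add: fmap_def trm_def sum_distrib_left[symmetric] add.commute)
qed

lemma psum_ball: "valid \<omega> u \<Longrightarrow> (\<Sum>m<n. trm \<omega> u m) \<in> ball 0 R"
proof (induction n arbitrary: \<omega> u)
  case 0 then show ?case using R_pos by simp
next
  case (Suc n)
  show ?case unfolding psum_step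
    using Suc.IH[OF valid_shift[OF Suc.prems]] Suc.prems
    by (intro fmap_ball) (auto simp: valid_def)
qed

lemma piw_cball: "valid \<omega> u \<Longrightarrow> piw \<omega> u \<in> cball 0 R"
proof -
  assume v: "valid \<omega> u"
  have lim: "(\<lambda>n. \<Sum>m<n. trm \<omega> u m) \<longlonglongrightarrow> piw \<omega> u"
    unfolding piw_def by (rule summable_LIMSEQ[OF summable_term[OF v]])
  have ev: "eventually (\<lambda>n. (\<Sum>m<n. trm \<omega> u m) \<in> cball 0 R) sequentially"
    using psum_ball[OF v] ball_subset_cball by (intro always_eventually) blast
  show ?thesis
    by (rule Lim_in_closed_set[OF closed_cball ev trivial_limit_sequentially lim])
qed

lemma piw_ball: "valid \<omega> u \<Longrightarrow> piw \<omega> u \<in> ball 0 R"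
proof -
  assume v: "valid \<omega> u"
  have "fmap lam t (\<omega> 0) (u 0) (piw (shiftn 1 \<omega>) (\<lambda>m. u (Suc m))) \<in> ball 0 R"
    by (rule fmap_cball) (use v piw_cball[OF valid_shift[OF v]] in \<open>auto simp: valid_def\<close>)
  then show ?thesis using piw_step[OF v] by simp
qed

lemma AE_valid: "AE u in PP \<omega>. valid \<omega> u"
proof -
  have "AE u in PP \<omega>. u m < kk (\<omega> m)" for m
  proof -
    have "AE x in MM \<omega> m. x < kk (\<omega> m)" unfolding MM_def by (simp add: AE_measure_pmf_iff set_pmf_digit)
    then show ?thesis unfolding PP_def by (rule AE_PiM_component[OF prob_MM, rotated]) simp
  qed
  then show ?thesis unfolding valid_def by (simp add: AE_all_countable)
qed

lemma eta_ball: "emeasure (eta kk lam t p \<omega>) (ball 0 R) = 1"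
proof -
  have "emeasure (eta kk lam t p \<omega>) (ball 0 R) = emeasure (PP \<omega>) (piw \<omega> -` ball 0 R \<inter> space (PP \<omega>))"
    unfolding eta_def' by (rule emeasure_distr) auto
  also have "\<dots> = emeasure (PP \<omega>) (space (PP \<omega>))"
  proof (rule emeasure_eq_AE)
    show "AE u in PP \<omega>. (u \<in> piw \<omega> -` ball 0 R \<inter> space (PP \<omega>)) = (u \<in> space (PP \<omega>))"
      using AE_valid by (rule AE_mp) (auto intro!: AE_I2 dest: piw_ball simp del: mem_ball)
  qed auto
  also have "\<dots> = 1" by (rule prob_space.emeasure_space_1[OF prob_PP])
  finally show ?thesis .
qed

lemma eta_outside: "emeasure (eta kk lam t p \<omega>) (A - ball 0 R) = 0"
proof -
  interpret prob_space "eta kk lam t p \<omega>" by (rule prob_eta)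
  have "emeasure (eta kk lam t p \<omega>) (UNIV - ball 0 R) = 0"
    using emeasure_compl[of "ball 0 R" "eta kk lam t p \<omega>"] eta_ball emeasure_space_1 by simp
  then show ?thesis
    by (rule emeasure_eq_0[rotated]) auto
qed


lemma MM_shift: "(\<lambda>i. MM \<omega> (Suc i)) = MM (shiftn 1 \<omega>)"
  by (auto simp: MM_def shiftn_def)

lemma fmap_meas: "fmap lam t i j \<in> borel_measurable borel"
  by (rule borel_measurable_continuous_onI) (rule continuous_fmap)

lemma fmap_vimage: "A \<in> sets borel \<Longrightarrow> fmap lam t i j -` A \<in> sets borel"
  using measurable_sets[OF fmap_meas, of A i j] by (simp only: space_borel Int_UNIV_right)

lemma eta_step:
  assumes A: "A \<in> sets borel"
  shows "emeasure (eta kk lam t p \<omega>) A =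
    (\<Sum>j<kk (\<omega> 0). ennreal (p (\<omega> 0) j) * emeasure (eta kk lam t p (shiftn 1 \<omega>)) (fmap lam t (\<omega> 0) j -` A))"
proof -
  let ?M0 = "MM \<omega> 0" and ?P' = "PP (shiftn 1 \<omega>)"
  let ?c = "\<lambda>(s, v). case_nat s v :: nat \<Rightarrow> nat"
  interpret P': prob_space ?P' by (rule prob_PP)
  have split: "distr (?M0 \<Otimes>\<^sub>M ?P') (PP \<omega>) ?c = PP \<omega>"
    using PiM_iter_gen[of "MM \<omega>", OF prob_MM] unfolding PP_def MM_shift .
  have mc: "?c \<in> measurable (?M0 \<Otimes>\<^sub>M ?P') (PP \<omega>)"
    using measurable_case_nat_PiM[of "MM \<omega>"] unfolding PP_def MM_shift .
  have e: "eta kk lam t p \<omega> = distr (?M0 \<Otimes>\<^sub>M ?P') borel (\<lambda>x. piw \<omega> (?c x))"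
    unfolding eta_def' by (subst split[symmetric]) (rule trans[OF distr_distr[OF piw_meas mc]], simp add: comp_def)
  have gm: "(\<lambda>x. piw \<omega> (?c x)) \<in> borel_measurable (?M0 \<Otimes>\<^sub>M ?P')"
    by (rule measurable_compose[OF mc piw_meas])
  define X where "X = (\<lambda>x. piw \<omega> (?c x)) -` A \<inter> space (?M0 \<Otimes>\<^sub>M ?P')"
  have X: "X \<in> sets (?M0 \<Otimes>\<^sub>M ?P')" unfolding X_def using gm A by (rule measurable_sets)
  have "emeasure (eta kk lam t p \<omega>) A = emeasure (?M0 \<Otimes>\<^sub>M ?P') X"
    unfolding e X_def by (rule emeasure_distr[OF gm A])
  also have "\<dots> = (\<integral>\<^sup>+s. emeasure ?P' (Pair s -` X) \<partial>?M0)"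
    by (rule P'.emeasure_pair_measure_alt[OF X])
  also have "\<dots> = (\<Sum>s\<in>set_pmf (digit_pmf kk p (\<omega> 0)). emeasure ?P' (Pair s -` X) * pmf (digit_pmf kk p (\<omega> 0)) s)"
    unfolding MM_def by (rule nn_integral_measure_pmf_finite) (auto simp: set_pmf_digit)
  also have "\<dots> = (\<Sum>j<kk (\<omega> 0). ennreal (p (\<omega> 0) j) * emeasure (eta kk lam t p (shiftn 1 \<omega>)) (fmap lam t (\<omega> 0) j -` A))"
  proof (unfold set_pmf_digit, rule sum.cong[OF refl])
    fix s assume s: "s \<in> {..<kk (\<omega> 0)}"
    have PX: "Pair s -` X = {v \<in> space ?P'. piw \<omega> (case_nat s v) \<in> A}"
      unfolding X_def by (auto simp: space_pair_measure MM_def)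
    have "emeasure ?P' (Pair s -` X) = emeasure ?P' (piw (shiftn 1 \<omega>) -` (fmap lam t (\<omega> 0) s -` A) \<inter> space ?P')"
    unfolding PX proof (rule emeasure_eq_AE)
      have AEv: "AE v in ?P'. valid (shiftn 1 \<omega>) v" by (rule AE_valid)
      have eqv: "(v \<in> {v \<in> space ?P'. piw \<omega> (case_nat s v) \<in> A}) = (v \<in> piw (shiftn 1 \<omega>) -` (fmap lam t (\<omega> 0) s -` A) \<inter> space ?P')"
        if v: "valid (shiftn 1 \<omega>) v" for v
      proof -
        have "valid \<omega> (case_nat s v)" unfolding valid_def
        proof
          fix m show "case_nat s v m < kk (\<omega> m)"
            using v s by (cases m) (simp_all add: valid_def shiftn_def)
        qed
        then have pe: "piw \<omega> (case_nat s v) = fmap lam t (\<omega> 0) s (piw (shiftn 1 \<omega>) v)"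
          using piw_step[of \<omega> "case_nat s v"] by simp
        show ?thesis unfolding mem_Collect_eq vimage_eq Int_iff pe by (rule conj_commute)
      qed
      show "AE v in ?P'. (v \<in> {v \<in> space ?P'. piw \<omega> (case_nat s v) \<in> A}) = (v \<in> piw (shiftn 1 \<omega>) -` (fmap lam t (\<omega> 0) s -` A) \<inter> space ?P')"
        using AEv by (rule AE_mp) (rule AE_I2, use eqv in blast)
      show "{v \<in> space ?P'. piw \<omega> (case_nat s v) \<in> A} \<in> sets ?P'"
        using sets_Pair1[OF X, of s] unfolding PX .
      show "piw (shiftn 1 \<omega>) -` (fmap lam t (\<omega> 0) s -` A) \<inter> space ?P' \<in> sets ?P'"
        using measurable_sets[OF piw_meas fmap_vimage[OF A]] .
    qed
    also have "\<dots> = emeasure (eta kk lam t p (shiftn 1 \<omega>)) (fmap lam t (\<omega> 0) s -` A)"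
      unfolding eta_def' by (rule emeasure_distr[symmetric, OF piw_meas fmap_vimage[OF A]])
    finally show "emeasure ?P' (Pair s -` X) * pmf (digit_pmf kk p (\<omega> 0)) s =
      ennreal (p (\<omega> 0) s) * emeasure (eta kk lam t p (shiftn 1 \<omega>)) (fmap lam t (\<omega> 0) s -` A)"
      using s by (simp add: pmf_digit mult.commute)
  qed
  finally show ?thesis .
qed


lemma shiftn_shiftn: "shiftn n (shiftn m \<omega>) = shiftn (n + m) \<omega>"
  by (auto simp: shiftn_def add.assoc)

lemma shiftn_0[simp]: "shiftn 0 \<omega> = \<omega>" by (simp add: shiftn_def)

lemma fword_affine: "fword lam t \<omega> u z = (\<Prod>j<length u. lam (\<omega> j)) * z + fword lam t \<omega> u 0"
proof (induction u arbitrary: \<omega> z)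
  case Nil then show ?case by simp
next
  case (Cons a u)
  have "fword lam t \<omega> (a # u) z = lam (\<omega> 0) * fword lam t (shiftn 1 \<omega>) u z + t (\<omega> 0) a"
    by (simp add: fmap_def)
  also have "fword lam t (shiftn 1 \<omega>) u z = (\<Prod>j<length u. lam (\<omega> (Suc j))) * z + fword lam t (shiftn 1 \<omega>) u 0"
    using Cons.IH[of "shiftn 1 \<omega>" z] by (simp add: shiftn_def)
  finally show ?case
    by (simp add: fmap_def prod.lessThan_Suc_shift algebra_simps del: prod.lessThan_Suc)
qed

lemma fword_meas: "fword lam t \<omega> u \<in> borel_measurable borel"
proof -
  have "fword lam t \<omega> u = (\<lambda>z. (\<Prod>j<length u. lam (\<omega> j)) * z + fword lam t \<omega> u 0)"
    by (rule ext) (rule fword_affine)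
  moreover have "(\<lambda>z. (\<Prod>j<length u. lam (\<omega> j)) * z + fword lam t \<omega> u 0) \<in> borel_measurable borel"
    by (intro borel_measurable_continuous_onI continuous_intros)
  ultimately show ?thesis by simp
qed

lemma fword_vimage: "A \<in> sets borel \<Longrightarrow> fword lam t \<omega> u -` A \<in> sets borel"
  using measurable_sets[OF fword_meas, of A \<omega> u] by (simp only: space_borel Int_UNIV_right)

lemma all_less_Suc_conv: "(\<forall>j<Suc m. P j) \<longleftrightarrow> P 0 \<and> (\<forall>j<m. P (Suc j))"
  by (auto simp: less_Suc_eq_0_disj)

lemma words_Cons: "(a # u \<in> words kk \<omega> n) \<longleftrightarrow> n = Suc (length u) \<and> a < kk (\<omega> 0) \<and> u \<in> words kk (shiftn 1 \<omega>) (length u)"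
  unfolding words_def by (cases "n = Suc (length u)") (simp_all add: all_less_Suc_conv shiftn_def)

lemma pword_nonneg: "u \<in> words kk \<omega> n \<Longrightarrow> pword p \<omega> u \<ge> 0"
proof (induction u arbitrary: \<omega> n)
  case Nil then show ?case by simp
next
  case (Cons a u)
  then have "a < kk (\<omega> 0)" "u \<in> words kk (shiftn 1 \<omega>) (length u)"
    by (auto simp: words_Cons)
  with Cons.IH show ?case by (auto intro!: mult_nonneg_nonneg less_imp_le[OF p_pos])
qed

lemma pword_pos: "u \<in> words kk \<omega> n \<Longrightarrow> pword p \<omega> u > 0"
proof (induction u arbitrary: \<omega> n)
  case Nil then show ?case by simp
next
  case (Cons a u)
  then have "a < kk (\<omega> 0)" "u \<in> words kk (shiftn 1 \<omega>) (length u)"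
    by (auto simp: words_Cons)
  with Cons.IH show ?case by (auto intro!: mult_pos_pos p_pos)
qed

lemma words_0: "words kk \<omega> 0 = {[]}" by (auto simp: words_def)

lemma words_Suc: "words kk \<omega> (Suc n) = (\<lambda>(j, u). j # u) ` (SIGMA j:{..<kk (\<omega> 0)}. words kk (shiftn 1 \<omega>) n)"
proof (rule set_eqI)
  fix x show "x \<in> words kk \<omega> (Suc n) \<longleftrightarrow> x \<in> (\<lambda>(j, u). j # u) ` (SIGMA j:{..<kk (\<omega> 0)}. words kk (shiftn 1 \<omega>) n)"
  proof (cases x)
    case Nil then show ?thesis by (auto simp: words_def)
  next
    case (Cons a u)
    have "x \<in> words kk \<omega> (Suc n) \<longleftrightarrow> a < kk (\<omega> 0) \<and> u \<in> words kk (shiftn 1 \<omega>) n"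
      unfolding Cons words_Cons by (auto simp: words_def)
    then show ?thesis using Cons by auto
  qed
qed

lemma finite_words: "finite (words kk \<omega> n)"
proof (induction n arbitrary: \<omega>)
  case 0 then show ?case by (simp add: words_0)
next
  case (Suc n) then show ?case unfolding words_Suc by auto
qed

lemma eta_words:
  assumes A: "A \<in> sets borel"
  shows "emeasure (eta kk lam t p \<omega>) A =
    (\<Sum>u\<in>words kk \<omega> n. ennreal (pword p \<omega> u) * emeasure (eta kk lam t p (shiftn n \<omega>)) (fword lam t \<omega> u -` A))"
  using A
proof (induction n arbitrary: \<omega> A)
  case 0 then show ?case by (simp add: words_0)
next
  case (Suc n)
  let ?\<omega>' = "shiftn 1 \<omega>"
  have "emeasure (eta kk lam t p \<omega>) A =
    (\<Sum>j<kk (\<omega> 0). ennreal (p (\<omega> 0) j) * emeasure (eta kk lam t p ?\<omega>') (fmap lam t (\<omega> 0) j -` A))"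
    by (rule eta_step[OF Suc.prems])
  also have "\<dots> = (\<Sum>j<kk (\<omega> 0). ennreal (p (\<omega> 0) j) *
      (\<Sum>u\<in>words kk ?\<omega>' n. ennreal (pword p ?\<omega>' u) * emeasure (eta kk lam t p (shiftn n ?\<omega>')) (fword lam t ?\<omega>' u -` (fmap lam t (\<omega> 0) j -` A))))"
  proof (rule sum.cong[OF refl])
    fix j show "ennreal (p (\<omega> 0) j) * emeasure (eta kk lam t p ?\<omega>') (fmap lam t (\<omega> 0) j -` A) = ennreal (p (\<omega> 0) j) *
      (\<Sum>u\<in>words kk ?\<omega>' n. ennreal (pword p ?\<omega>' u) * emeasure (eta kk lam t p (shiftn n ?\<omega>')) (fword lam t ?\<omega>' u -` (fmap lam t (\<omega> 0) j -` A)))"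
      using Suc.IH[OF fmap_vimage[OF Suc.prems], of ?\<omega>' "\<omega> 0" j] by simp
  qed
  also have "\<dots> = (\<Sum>(j, u)\<in>(SIGMA j:{..<kk (\<omega> 0)}. words kk ?\<omega>' n).
      ennreal (p (\<omega> 0) j) * (ennreal (pword p ?\<omega>' u) * emeasure (eta kk lam t p (shiftn n ?\<omega>')) (fword lam t ?\<omega>' u -` (fmap lam t (\<omega> 0) j -` A))))"
    by (subst sum.Sigma[symmetric]) (auto simp: sum_distrib_left finite_words)
  also have "\<dots> = (\<Sum>x\<in>(SIGMA j:{..<kk (\<omega> 0)}. words kk ?\<omega>' n).
      ennreal (pword p \<omega> ((\<lambda>(j, u). j # u) x)) * emeasure (eta kk lam t p (shiftn (Suc n) \<omega>)) (fword lam t \<omega> ((\<lambda>(j, u). j # u) x) -` A))"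
  proof -
    have eq: "ennreal (p (\<omega> 0) j) * (ennreal (pword p ?\<omega>' u) * emeasure (eta kk lam t p (shiftn n ?\<omega>')) (fword lam t ?\<omega>' u -` (fmap lam t (\<omega> 0) j -` A))) =
      ennreal (pword p \<omega> (j # u)) * emeasure (eta kk lam t p (shiftn (Suc n) \<omega>)) (fword lam t \<omega> (j # u) -` A)"
      if j: "j < kk (\<omega> 0)" and u: "u \<in> words kk ?\<omega>' n" for j u
    proof -
      have "ennreal (pword p \<omega> (j # u)) = ennreal (p (\<omega> 0) j) * ennreal (pword p ?\<omega>' u)"
        using j u by (simp add: ennreal_mult' pword_nonneg less_imp_le[OF p_pos])
      moreover have "fword lam t \<omega> (j # u) -` A = fword lam t ?\<omega>' u -` (fmap lam t (\<omega> 0) j -` A)"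
        by auto
      moreover have "shiftn n ?\<omega>' = shiftn (Suc n) \<omega>" by (simp add: shiftn_shiftn)
      ultimately show ?thesis by (simp add: mult.assoc)
    qed
    show ?thesis by (rule sum.cong[OF refl]) (use eq in \<open>auto simp del: fword.simps pword.simps\<close>)
  qed
  also have "\<dots> = (\<Sum>u\<in>words kk \<omega> (Suc n). ennreal (pword p \<omega> u) * emeasure (eta kk lam t p (shiftn (Suc n) \<omega>)) (fword lam t \<omega> u -` A))"
    unfolding words_Suc by (rule sum.reindex[symmetric, unfolded comp_def]) (auto simp: inj_on_def)
  finally show ?case .
qed

end

lemma sa_borel: "sigma_algebra UNIV (sets (borel :: 'a::topological_space measure))"
  using sets.sigma_algebra_axioms[of borel] by simp

lemma emeasure_mix:
  fixes \<nu> :: "'b \<Rightarrow> 'a::topological_space measure"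
  assumes S: "finite S" and sets: "\<And>u. u \<in> S \<Longrightarrow> sets (\<nu> u) = sets borel"
    and A: "A \<in> sets borel"
  shows "emeasure (measure_of UNIV (sets borel) (\<lambda>A. (\<Sum>u\<in>S. c u * emeasure (\<nu> u) A) / Z)) A
     = (\<Sum>u\<in>S. c u * emeasure (\<nu> u) A) / Z"
proof (rule emeasure_measure_of_sigma[OF sa_borel _ _ A])
  show "positive (sets borel) (\<lambda>A. (\<Sum>u\<in>S. c u * emeasure (\<nu> u) A) / Z)"
    unfolding positive_def by simp
  show "countably_additive (sets borel) (\<lambda>A. (\<Sum>u\<in>S. c u * emeasure (\<nu> u) A) / Z)"
    unfolding countably_additive_def
  proof (intro allI impI)
    fix F :: "nat \<Rightarrow> 'a set"
    assume F: "range F \<subseteq> sets borel" "disjoint_family F" "\<Union> (range F) \<in> sets borel"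
    have inner: "(\<Sum>i. (\<Sum>u\<in>S. c u * emeasure (\<nu> u) (F i))) = (\<Sum>u\<in>S. c u * emeasure (\<nu> u) (\<Union> (range F)))"
    proof -
      have "(\<Sum>i. (\<Sum>u\<in>S. c u * emeasure (\<nu> u) (F i))) = (\<Sum>u\<in>S. (\<Sum>i. c u * emeasure (\<nu> u) (F i)))"
        by (rule suminf_sum) simp
      also have "\<dots> = (\<Sum>u\<in>S. c u * emeasure (\<nu> u) (\<Union> (range F)))"
      proof (rule sum.cong[OF refl])
        fix u assume u: "u \<in> S"
        have "(\<Sum>i. emeasure (\<nu> u) (F i)) = emeasure (\<nu> u) (\<Union> (range F))"
          by (rule suminf_emeasure) (use F sets[OF u] in auto)
        then show "(\<Sum>i. c u * emeasure (\<nu> u) (F i)) = c u * emeasure (\<nu> u) (\<Union> (range F))"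
          by simp
      qed
      finally show ?thesis .
    qed
    have "(\<Sum>i. (\<Sum>u\<in>S. c u * emeasure (\<nu> u) (F i)) / Z) = (\<Sum>i. inverse Z * (\<Sum>u\<in>S. c u * emeasure (\<nu> u) (F i)))"
      by (simp add: divide_ennreal_def mult.commute)
    also have "\<dots> = inverse Z * (\<Sum>i. (\<Sum>u\<in>S. c u * emeasure (\<nu> u) (F i)))"
      by (rule ennreal_suminf_cmult)
    also have "\<dots> = inverse Z * (\<Sum>u\<in>S. c u * emeasure (\<nu> u) (\<Union> (range F)))"
      by (simp only: inner)
    finally show "(\<Sum>i. (\<Sum>u\<in>S. c u * emeasure (\<nu> u) (F i)) / Z) = (\<Sum>u\<in>S. c u * emeasure (\<nu> u) (\<Union> (range F))) / Z"
      by (simp add: divide_ennreal_def mult.commute)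
  qed
qed

lemma tv_arith:
  fixes g Z E e :: real
  assumes "0 \<le> g" "g \<le> Z" "0 \<le> E" "E \<le> e" "0 < Z + e"
  shows "\<bar>(g + E) / (Z + e) - g / Z\<bar> \<le> e / (Z + e)"
proof (cases "Z = 0")
  case True
  then have "g = 0" using assms by simp
  then show ?thesis using True assms by (simp add: divide_right_mono abs_of_nonneg)
next
  case False
  then have Z: "Z > 0" using assms by simp
  have "(g + E) / (Z + e) - g / Z = (Z * E - g * e) / (Z * (Z + e))"
    using Z assms by (simp add: field_simps)
  moreover have "\<bar>Z * E - g * e\<bar> \<le> Z * e"
  proof -
    have "Z * E \<le> Z * e" "g * e \<le> Z * e" "0 \<le> Z * E" "0 \<le> g * e"
      using assms Z by (auto intro: mult_left_mono mult_right_mono)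
    then show ?thesis by linarith
  qed
  ultimately have "\<bar>(g + E) / (Z + e) - g / Z\<bar> \<le> Z * e / (Z * (Z + e))"
  proof -
    assume eq: "(g + E) / (Z + e) - g / Z = (Z * E - g * e) / (Z * (Z + e))"
      and le: "\<bar>Z * E - g * e\<bar> \<le> Z * e"
    have pos: "Z * (Z + e) > 0" using Z assms by simp
    have "\<bar>(Z * E - g * e) / (Z * (Z + e))\<bar> = \<bar>Z * E - g * e\<bar> / (Z * (Z + e))"
      using pos by (simp add: abs_div)
    also have "\<dots> \<le> Z * e / (Z * (Z + e))" using le pos by (rule divide_right_mono[OF _ less_imp_le])
    finally show ?thesis using eq by simp
  qed
  also have "\<dots> = e / (Z + e)" using Z by simp
  finally show ?thesis .
qed

context pm begin

definition mu :: "(nat \<Rightarrow> 'i) \<Rightarrow> nat \<Rightarrow> nat list \<Rightarrow> complex set \<Rightarrow> real" where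
  "mu \<omega> n u X = measure (eta kk lam t p (shiftn n \<omega>)) (fword lam t \<omega> u -` X)"

lemma mu_nonneg: "mu \<omega> n u X \<ge> 0" by (simp add: mu_def)
lemma mu_le1: "mu \<omega> n u X \<le> 1"
  unfolding mu_def by (rule prob_space.prob_le_1[OF prob_eta])
lemma mu_UNIV: "mu \<omega> n u UNIV = 1"
  unfolding mu_def using prob_space.prob_space[OF prob_eta] by simp

lemma mu_mono: "X \<subseteq> Y \<Longrightarrow> Y \<in> sets borel \<Longrightarrow> mu \<omega> n u X \<le> mu \<omega> n u Y"
  unfolding mu_def
  by (rule finite_measure.finite_measure_mono[OF prob_space.finite_measure[OF prob_eta]])
     (auto intro: fword_vimage)

lemma emeasure_eta_real: "emeasure (eta kk lam t p \<omega>) X = ennreal (measure (eta kk lam t p \<omega>) X)"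
  using finite_measure.emeasure_eq_measure[OF prob_space.finite_measure[OF prob_eta]] by simp

lemma eta_words_real:
  assumes X: "X \<in> sets borel"
  shows "measure (eta kk lam t p \<omega>) X = (\<Sum>u\<in>words kk \<omega> n. pword p \<omega> u * mu \<omega> n u X)"
proof -
  have "emeasure (eta kk lam t p \<omega>) X = (\<Sum>u\<in>words kk \<omega> n. ennreal (pword p \<omega> u * mu \<omega> n u X))"
    unfolding eta_words[OF X, of \<omega> n] mu_def
    by (rule sum.cong[OF refl]) (simp add: emeasure_eta_real ennreal_mult' pword_nonneg)
  also have "\<dots> = ennreal (\<Sum>u\<in>words kk \<omega> n. pword p \<omega> u * mu \<omega> n u X)"
    by (rule sum_ennreal) (simp add: pword_nonneg mu_nonneg)
  finally show ?thesis
    unfolding measure_def by (simp add: sum_nonneg pword_nonneg mu_nonneg)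
qed

lemma sum_pword: "(\<Sum>u\<in>words kk \<omega> n. pword p \<omega> u) = 1"
  using eta_words_real[of UNIV \<omega> n] prob_space.prob_space[OF prob_eta] by (simp add: mu_UNIV)

definition Sset :: "(nat \<Rightarrow> 'i) \<Rightarrow> nat \<Rightarrow> complex set \<Rightarrow> nat list set" where
  "Sset \<omega> n D = {u \<in> words kk \<omega> n. fword lam t \<omega> u ` ball 0 R \<subseteq> D}"

lemma finite_Sset: "finite (Sset \<omega> n D)"
  unfolding Sset_def by (rule finite_subset[OF _ finite_words[of \<omega> n]]) auto

lemma trunc_measure:
  assumes A: "A \<in> sets borel"
  shows "measure (trunc_sq kk lam t p R \<omega> n D) A =
    (\<Sum>u\<in>Sset \<omega> n D. pword p \<omega> u * mu \<omega> n u A) / (\<Sum>u\<in>Sset \<omega> n D. pword p \<omega> u)"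
proof -
  let ?S = "Sset \<omega> n D"
  let ?Z = "\<Sum>u\<in>?S. pword p \<omega> u"
  let ?G = "\<Sum>u\<in>?S. pword p \<omega> u * mu \<omega> n u A"
  have Sw: "?S \<subseteq> words kk \<omega> n" by (auto simp: Sset_def)
  have tr: "trunc_sq kk lam t p R \<omega> n D = measure_of UNIV (sets borel)
          (\<lambda>A. (\<Sum>u\<in>?S. ennreal (pword p \<omega> u) *
                  emeasure (distr (eta kk lam t p (shiftn n \<omega>)) borel (fword lam t \<omega> u)) A)
               / ennreal ?Z)"
    unfolding trunc_sq_def Sset_def Let_def ..
  have "emeasure (trunc_sq kk lam t p R \<omega> n D) A =
      (\<Sum>u\<in>?S. ennreal (pword p \<omega> u) * emeasure (distr (eta kk lam t p (shiftn n \<omega>)) borel (fword lam t \<omega> u)) A) / ennreal ?Z"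
    unfolding tr by (rule emeasure_mix[OF finite_Sset _ A]) simp
  also have "(\<Sum>u\<in>?S. ennreal (pword p \<omega> u) * emeasure (distr (eta kk lam t p (shiftn n \<omega>)) borel (fword lam t \<omega> u)) A)
      = ennreal ?G"
  proof -
    have "(\<Sum>u\<in>?S. ennreal (pword p \<omega> u) * emeasure (distr (eta kk lam t p (shiftn n \<omega>)) borel (fword lam t \<omega> u)) A)
      = (\<Sum>u\<in>?S. ennreal (pword p \<omega> u * mu \<omega> n u A))"
    proof (rule sum.cong[OF refl])
      fix u assume u: "u \<in> ?S"
      have ed: "emeasure (distr (eta kk lam t p (shiftn n \<omega>)) borel (fword lam t \<omega> u)) A = emeasure (eta kk lam t p (shiftn n \<omega>)) (fword lam t \<omega> u -` A)"
        using emeasure_distr[of "fword lam t \<omega> u" "eta kk lam t p (shiftn n \<omega>)" borel A] fword_meas A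
        by (simp add: measurable_def)
      show "ennreal (pword p \<omega> u) * emeasure (distr (eta kk lam t p (shiftn n \<omega>)) borel (fword lam t \<omega> u)) A = ennreal (pword p \<omega> u * mu \<omega> n u A)"
      proof -
        have "pword p \<omega> u \<ge> 0" using u Sw by (auto intro: pword_nonneg)
        then show ?thesis using ed by (simp add: mu_def emeasure_eta_real ennreal_mult')
      qed
    qed
    also have "\<dots> = ennreal ?G"
      using Sw by (intro sum_ennreal) (auto intro!: mult_nonneg_nonneg pword_nonneg mu_nonneg)
    finally show ?thesis .
  qed
  finally have e: "emeasure (trunc_sq kk lam t p R \<omega> n D) A = ennreal ?G / ennreal ?Z" .
  show ?thesis
  proof (cases "?S = {}")
    case True
    then show ?thesis unfolding measure_def e by simp
  next
    case False
    then have "?Z > 0" using Sw finite_Sset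
      by (intro sum_pos) (auto intro: pword_pos)
    moreover have "?G \<ge> 0" using Sw by (auto intro!: sum_nonneg mult_nonneg_nonneg pword_nonneg mu_nonneg)
    ultimately show ?thesis unfolding measure_def e by (simp add: divide_ennreal)
  qed
qed

end


context pm begin

lemma measure_outside: "measure (eta kk lam t p \<omega>) (UNIV - ball 0 R) = 0"
  using eta_outside[of \<omega> UNIV] by (simp add: measure_def)

lemma mu_S:
  assumes u: "u \<in> Sset \<omega> n D" and A: "A \<in> sets borel" and D: "D \<in> sets borel"
  shows "mu \<omega> n u (D \<inter> A) = mu \<omega> n u A"
proof (rule antisym)
  show "mu \<omega> n u (D \<inter> A) \<le> mu \<omega> n u A" by (rule mu_mono) (use A in auto)
  let ?\<eta> = "eta kk lam t p (shiftn n \<omega>)"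
  interpret F: finite_measure ?\<eta> by (rule prob_space.finite_measure[OF prob_eta])
  have sub: "fword lam t \<omega> u -` A \<subseteq> fword lam t \<omega> u -` (D \<inter> A) \<union> (UNIV - ball 0 R)"
    using u by (auto simp: Sset_def)
  have "mu \<omega> n u A \<le> measure ?\<eta> (fword lam t \<omega> u -` (D \<inter> A) \<union> (UNIV - ball 0 R))"
    unfolding mu_def by (rule F.finite_measure_mono[OF sub]) (use A D in \<open>auto intro!: fword_vimage\<close>)
  also have "\<dots> \<le> measure ?\<eta> (fword lam t \<omega> u -` (D \<inter> A)) + measure ?\<eta> (UNIV - ball 0 R)"
    by (rule measure_Un_le) (use A D in \<open>auto intro!: fword_vimage\<close>)
  also have "\<dots> = mu \<omega> n u (D \<inter> A)" by (simp add: measure_outside mu_def)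
  finally show "mu \<omega> n u A \<le> mu \<omega> n u (D \<inter> A)" .
qed

lemma tv_square:
  assumes D: "D \<in> sets borel" and pos: "measure (eta kk lam t p \<omega>) D > 0"
  shows "tv_dist (uniform_measure (eta kk lam t p \<omega>) D) (trunc_sq kk lam t p R \<omega> n D)
     \<le> (\<Sum>u\<in>words kk \<omega> n - Sset \<omega> n D. pword p \<omega> u * mu \<omega> n u D) / measure (eta kk lam t p \<omega>) D"
proof -
  let ?\<eta> = "eta kk lam t p \<omega>"
  let ?W = "words kk \<omega> n" and ?S = "Sset \<omega> n D"
  let ?e = "\<Sum>u\<in>?W - ?S. pword p \<omega> u * mu \<omega> n u D"
  let ?Z = "\<Sum>u\<in>?S. pword p \<omega> u"
  have SW: "?S \<subseteq> ?W" by (auto simp: Sset_def)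
  have fW: "finite ?W" by (rule finite_words)
  have pw: "u \<in> ?W \<Longrightarrow> pword p \<omega> u \<ge> 0" for u by (rule pword_nonneg)
  have split: "measure ?\<eta> (D \<inter> A) = (\<Sum>u\<in>?S. pword p \<omega> u * mu \<omega> n u A) + (\<Sum>u\<in>?W - ?S. pword p \<omega> u * mu \<omega> n u (D \<inter> A))"
    if A: "A \<in> sets borel" for A
  proof -
    have "measure ?\<eta> (D \<inter> A) = (\<Sum>u\<in>?W. pword p \<omega> u * mu \<omega> n u (D \<inter> A))"
      by (rule eta_words_real) (use A D in auto)
    also have "\<dots> = (\<Sum>u\<in>?W - ?S. pword p \<omega> u * mu \<omega> n u (D \<inter> A)) + (\<Sum>u\<in>?S. pword p \<omega> u * mu \<omega> n u (D \<inter> A))"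
      by (rule sum.subset_diff[OF SW fW])
    also have "(\<Sum>u\<in>?S. pword p \<omega> u * mu \<omega> n u (D \<inter> A)) = (\<Sum>u\<in>?S. pword p \<omega> u * mu \<omega> n u A)"
      by (rule sum.cong[OF refl]) (simp add: mu_S[OF _ A D])
    finally show ?thesis by simp
  qed
  have etaD: "measure ?\<eta> D = ?Z + ?e"
    using split[of UNIV] by (simp add: mu_UNIV)
  have "emeasure ?\<eta> D \<noteq> 0" using pos by (simp add: emeasure_eta_real)
  moreover have "emeasure ?\<eta> D \<noteq> \<infinity>" by (simp add: emeasure_eta_real)
  ultimately have raw: "measure (uniform_measure ?\<eta> D) A = measure ?\<eta> (D \<inter> A) / measure ?\<eta> D"
    if "A \<in> sets borel" for A using that by (intro measure_uniform_measure) auto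
  show ?thesis
    unfolding tv_dist_def
  proof (rule cSUP_least)
    show "sets (uniform_measure ?\<eta> D) \<noteq> {}" by auto
    fix A assume "A \<in> sets (uniform_measure ?\<eta> D)"
    then have A: "A \<in> sets borel" by simp
    let ?g = "\<Sum>u\<in>?S. pword p \<omega> u * mu \<omega> n u A"
    let ?E = "\<Sum>u\<in>?W - ?S. pword p \<omega> u * mu \<omega> n u (D \<inter> A)"
    have "0 \<le> ?g" using SW by (auto intro!: sum_nonneg mult_nonneg_nonneg pw mu_nonneg)
    moreover have "?g \<le> ?Z" using SW by (intro sum_mono) (auto intro!: mult_left_le mu_le1 pw)
    moreover have "0 \<le> ?E" by (auto intro!: sum_nonneg mult_nonneg_nonneg pw mu_nonneg)
    moreover have "?E \<le> ?e" by (intro sum_mono mult_left_mono mu_mono) (use D in \<open>auto intro: pw\<close>)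
    moreover have "0 < ?Z + ?e" using pos etaD by simp
    ultimately have "\<bar>(?g + ?E) / (?Z + ?e) - ?g / ?Z\<bar> \<le> ?e / (?Z + ?e)" by (rule tv_arith)
    then show "\<bar>measure (uniform_measure ?\<eta> D) A - measure (trunc_sq kk lam t p R \<omega> n D) A\<bar> \<le> ?e / measure ?\<eta> D"
      unfolding raw[OF A] trunc_measure[OF A] split[OF A] etaD .
  qed
qed

end

definition sq :: "nat \<Rightarrow> int \<times> int \<Rightarrow> complex set" where
  "sq k q = {z. \<lfloor>2 ^ k * Re z\<rfloor> = fst q \<and> \<lfloor>(2::real) ^ k * Im z\<rfloor> = snd q}"

definition idx :: "nat \<Rightarrow> complex \<Rightarrow> int \<times> int" where
  "idx k x = (\<lfloor>2 ^ k * Re x\<rfloor>, \<lfloor>(2::real) ^ k * Im x\<rfloor>)"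

lemma dyadic_sq: "dyadic k x = sq k (idx k x)"
  by (simp add: dyadic_def sq_def idx_def)

lemma in_sq_iff: "y \<in> sq k q \<longleftrightarrow> idx k y = q"
  by (auto simp: sq_def idx_def)

lemma sq_borel[measurable]: "sq k q \<in> sets borel"
  unfolding sq_def by measurable

lemma disjoint_sq: "disjoint_family (sq k)"
  by (auto simp: disjoint_family_on_def in_sq_iff)

lemma UN_sq: "(\<Union>q. sq k q) = UNIV"
  by (auto simp: in_sq_iff)


context pm begin

definition St :: "(nat \<Rightarrow> 'i) \<Rightarrow> nat \<Rightarrow> nat \<Rightarrow> nat list set" where
  "St \<omega> n k = {u \<in> words kk \<omega> n. \<not> (fword lam t \<omega> u ` ball 0 R \<subseteq> dyadic k (fword lam t \<omega> u 0))}"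

definition nu :: "(nat \<Rightarrow> 'i) \<Rightarrow> nat \<Rightarrow> nat \<Rightarrow> complex set \<Rightarrow> real" where
  "nu \<omega> n k X = (\<Sum>u\<in>St \<omega> n k. pword p \<omega> u * mu \<omega> n u X)"

lemma St_sub: "St \<omega> n k \<subseteq> words kk \<omega> n" by (auto simp: St_def)
lemma finite_St: "finite (St \<omega> n k)" using finite_subset[OF St_sub finite_words] .

lemma e_le_nu:
  "(\<Sum>u\<in>words kk \<omega> n - Sset \<omega> n (sq k q). pword p \<omega> u * mu \<omega> n u (sq k q)) \<le> nu \<omega> n k (sq k q)"
proof -
  let ?W = "words kk \<omega> n" and ?S = "Sset \<omega> n (sq k q)" and ?T = "St \<omega> n k"
  let ?f = "\<lambda>u. pword p \<omega> u * mu \<omega> n u (sq k q)"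
  have fin: "finite (?W - ?S)" using finite_words by simp
  have zero: "?f u = 0" if u: "u \<in> ?W - ?S - ?T" for u
  proof -
    let ?c = "fword lam t \<omega> u 0"
    have uW: "u \<in> ?W" and uS: "u \<notin> ?S" and uT: "u \<notin> ?T" using u by blast+
    have "fword lam t \<omega> u ` ball 0 R \<subseteq> dyadic k ?c" using uW uT unfolding St_def by blast
    then have sub: "fword lam t \<omega> u ` ball 0 R \<subseteq> sq k (idx k ?c)" by (simp only: dyadic_sq)
    have ne: "idx k ?c \<noteq> q"
    proof
      assume e: "idx k ?c = q"
      have "u \<in> ?S" unfolding Sset_def using uW sub unfolding e by blast
      then show False using uS by contradiction
    qed
    have "fword lam t \<omega> u -` sq k q \<subseteq> UNIV - ball 0 R"
    proof
      fix z assume z: "z \<in> fword lam t \<omega> u -` sq k q"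
      show "z \<in> UNIV - ball 0 R"
      proof (rule DiffI)
        show "z \<in> UNIV" by simp
        show "z \<notin> ball 0 R"
      proof
        assume "z \<in> ball 0 R"
        then have "fword lam t \<omega> u z \<in> sq k (idx k ?c)" using sub by blast
        then have "idx k (fword lam t \<omega> u z) = idx k ?c" by (simp only: in_sq_iff)
        moreover have "idx k (fword lam t \<omega> u z) = q" using z by (simp only: vimage_eq in_sq_iff)
        ultimately show False using ne by simp
      qed
      qed
    qed
    then have "mu \<omega> n u (sq k q) \<le> measure (eta kk lam t p (shiftn n \<omega>)) (UNIV - ball 0 R)"
      unfolding mu_def
      by (rule finite_measure.finite_measure_mono[OF prob_space.finite_measure[OF prob_eta]]) simp
    then have "mu \<omega> n u (sq k q) = 0" using mu_nonneg[of \<omega> n u "sq k q"] measure_outside by simp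
    then show ?thesis by simp
  qed
  have eq0: "(\<Sum>u\<in>?W - ?S. ?f u) = (\<Sum>u\<in>(?W - ?S) - (?W - ?S) \<inter> ?T. ?f u) + (\<Sum>u\<in>(?W - ?S) \<inter> ?T. ?f u)"
    by (rule sum.subset_diff[OF _ fin]) (rule Int_lower1)
  have "(?W - ?S) - (?W - ?S) \<inter> ?T = (?W - ?S) - ?T" by blast
  then have eq: "(\<Sum>u\<in>?W - ?S. ?f u) = (\<Sum>u\<in>(?W - ?S) - ?T. ?f u) + (\<Sum>u\<in>(?W - ?S) \<inter> ?T. ?f u)"
    using eq0 by simp
  have z: "(\<Sum>u\<in>(?W - ?S) - ?T. ?f u) = 0" by (rule sum.neutral) (use zero in blast)
  have le: "(\<Sum>u\<in>(?W - ?S) \<inter> ?T. ?f u) \<le> (\<Sum>u\<in>?T. ?f u)"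
  proof (rule sum_mono2[OF finite_St])
    show "(?W - ?S) \<inter> ?T \<subseteq> ?T" by (rule Int_lower2)
    fix u assume "u \<in> ?T - (?W - ?S) \<inter> ?T"
    then have "u \<in> ?W" using St_sub by blast
    then show "0 \<le> ?f u" by (intro mult_nonneg_nonneg pword_nonneg mu_nonneg)
  qed
  show ?thesis unfolding nu_def eq z using le by simp
qed

end


context pm begin

lemma nu_nonneg: "nu \<omega> n k X \<ge> 0"
  unfolding nu_def using St_sub by (auto intro!: sum_nonneg mult_nonneg_nonneg pword_nonneg mu_nonneg)

lemma bad_bound:
  assumes eps: "\<epsilon> > 0"
  shows "\<epsilon> * measure (eta kk lam t p \<omega>) (\<Union>q\<in>{q. \<epsilon> * measure (eta kk lam t p \<omega>) (sq k q) \<le> nu \<omega> n k (sq k q)}. sq k q)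
     \<le> nu \<omega> n k UNIV"
proof -
  let ?\<eta> = "eta kk lam t p \<omega>" and ?\<eta>' = "eta kk lam t p (shiftn n \<omega>)"
  let ?Q = "{q. \<epsilon> * measure ?\<eta> (sq k q) \<le> nu \<omega> n k (sq k q)}"
  let ?T = "St \<omega> n k"
  have cQ: "countable ?Q" by (rule countable_subset[OF subset_UNIV]) simp
  have emU: "emeasure ?\<eta> (\<Union>q\<in>?Q. sq k q) = (\<integral>\<^sup>+q. emeasure ?\<eta> (sq k q) \<partial>count_space ?Q)"
    by (rule emeasure_UN_countable) (auto simp: cQ disjoint_family_on_def in_sq_iff)
  have nu_enn: "ennreal (nu \<omega> n k X) = (\<Sum>u\<in>?T. ennreal (pword p \<omega> u) * emeasure ?\<eta>' (fword lam t \<omega> u -` X))" for X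
  proof -
    have "ennreal (nu \<omega> n k X) = (\<Sum>u\<in>?T. ennreal (pword p \<omega> u * mu \<omega> n u X))"
      unfolding nu_def using St_sub by (intro sum_ennreal[symmetric]) (auto intro!: mult_nonneg_nonneg pword_nonneg mu_nonneg)
    also have "\<dots> = (\<Sum>u\<in>?T. ennreal (pword p \<omega> u) * emeasure ?\<eta>' (fword lam t \<omega> u -` X))"
    proof (rule sum.cong[OF refl])
      fix u assume "u \<in> ?T"
      then have "u \<in> words kk \<omega> n" using St_sub by blast
      then have "pword p \<omega> u \<ge> 0" by (rule pword_nonneg)
      then show "ennreal (pword p \<omega> u * mu \<omega> n u X) = ennreal (pword p \<omega> u) * emeasure ?\<eta>' (fword lam t \<omega> u -` X)"
        by (simp add: ennreal_mult' mu_def emeasure_eta_real)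
    qed
    finally show ?thesis .
  qed
  have "ennreal \<epsilon> * emeasure ?\<eta> (\<Union>q\<in>?Q. sq k q) = (\<integral>\<^sup>+q. ennreal \<epsilon> * emeasure ?\<eta> (sq k q) \<partial>count_space ?Q)"
    unfolding emU by (rule nn_integral_cmult[symmetric]) simp
  also have "\<dots> \<le> (\<integral>\<^sup>+q. ennreal (nu \<omega> n k (sq k q)) \<partial>count_space ?Q)"
  proof (rule nn_integral_mono)
    fix q assume "q \<in> space (count_space ?Q)"
    then have "\<epsilon> * measure ?\<eta> (sq k q) \<le> nu \<omega> n k (sq k q)" by simp
    then show "ennreal \<epsilon> * emeasure ?\<eta> (sq k q) \<le> ennreal (nu \<omega> n k (sq k q))"
      using eps by (simp add: emeasure_eta_real ennreal_mult'[symmetric] ennreal_leI)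
  qed
  also have "\<dots> = (\<integral>\<^sup>+q. ennreal (nu \<omega> n k (sq k q)) * indicator ?Q q \<partial>count_space UNIV)"
    by (rule nn_integral_count_space_indicator) simp
  also have "\<dots> \<le> (\<integral>\<^sup>+q. ennreal (nu \<omega> n k (sq k q)) \<partial>count_space UNIV)"
    by (rule nn_integral_mono) (simp add: indicator_def)
  also have "\<dots> = (\<integral>\<^sup>+q. (\<Sum>u\<in>?T. ennreal (pword p \<omega> u) * emeasure ?\<eta>' (fword lam t \<omega> u -` sq k q)) \<partial>count_space UNIV)"
    by (simp only: nu_enn)
  also have "\<dots> = (\<Sum>u\<in>?T. (\<integral>\<^sup>+q. ennreal (pword p \<omega> u) * emeasure ?\<eta>' (fword lam t \<omega> u -` sq k q) \<partial>count_space UNIV))"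
    by (rule nn_integral_sum) simp
  also have "\<dots> = (\<Sum>u\<in>?T. ennreal (pword p \<omega> u) * emeasure ?\<eta>' (fword lam t \<omega> u -` UNIV))"
  proof (rule sum.cong[OF refl])
    fix u assume "u \<in> ?T"
    have "(\<integral>\<^sup>+q. emeasure ?\<eta>' (fword lam t \<omega> u -` sq k q) \<partial>count_space UNIV) = emeasure ?\<eta>' (\<Union>q\<in>UNIV. fword lam t \<omega> u -` sq k q)"
      by (rule emeasure_UN_countable[symmetric]) (auto simp: disjoint_family_on_def in_sq_iff intro: fword_vimage)
    also have "(\<Union>q\<in>UNIV. fword lam t \<omega> u -` sq k q) = fword lam t \<omega> u -` UNIV"
      by (auto simp: in_sq_iff)
    finally have e: "(\<integral>\<^sup>+q. emeasure ?\<eta>' (fword lam t \<omega> u -` sq k q) \<partial>count_space UNIV) = emeasure ?\<eta>' (fword lam t \<omega> u -` UNIV)" .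
    show "(\<integral>\<^sup>+q. ennreal (pword p \<omega> u) * emeasure ?\<eta>' (fword lam t \<omega> u -` sq k q) \<partial>count_space UNIV) = ennreal (pword p \<omega> u) * emeasure ?\<eta>' (fword lam t \<omega> u -` UNIV)"
      by (subst nn_integral_cmult) (simp_all add: e)
  qed
  also have "\<dots> = ennreal (nu \<omega> n k UNIV)" by (simp only: nu_enn)
  finally have "ennreal \<epsilon> * emeasure ?\<eta> (\<Union>q\<in>?Q. sq k q) \<le> ennreal (nu \<omega> n k UNIV)" .
  then have "ennreal (\<epsilon> * measure ?\<eta> (\<Union>q\<in>?Q. sq k q)) \<le> ennreal (nu \<omega> n k UNIV)"
    using eps by (simp add: emeasure_eta_real ennreal_mult')
  then show ?thesis using nu_nonneg by (simp add: ennreal_le_iff)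
qed

end

lemma G1:
  fixes a x y r :: real
  assumes a: "a > 0" and xy: "\<bar>x - y\<bar> < r" and fl: "\<lfloor>a * x\<rfloor> \<noteq> \<lfloor>a * y\<rfloor>"
  shows "\<exists>m::int. \<bar>x - m / a\<bar> < r"
proof (cases "x < y")
  case True
  let ?m = "\<lfloor>a * y\<rfloor>"
  have "\<lfloor>a * x\<rfloor> \<le> ?m" using True a by (intro floor_mono) simp
  then have "\<lfloor>a * x\<rfloor> < ?m" using fl by simp
  then have "a * x < ?m" by (simp add: floor_less_iff)
  moreover have "?m \<le> a * y" by simp
  ultimately have "x < ?m / a" "?m / a \<le> y" using a by (simp_all add: field_simps)
  then show ?thesis using xy by (intro exI[of _ ?m]) simp
next
  case False
  let ?m = "\<lfloor>a * x\<rfloor>"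
  have "\<lfloor>a * y\<rfloor> \<le> ?m" using False a by (intro floor_mono) simp
  then have "\<lfloor>a * y\<rfloor> < ?m" using fl by simp
  then have "a * y < ?m" by (simp add: floor_less_iff)
  moreover have "?m \<le> a * x" by simp
  ultimately have "y < ?m / a" "?m / a \<le> x" using a by (simp_all add: field_simps)
  then show ?thesis using xy by (intro exI[of _ ?m]) simp
qed

lemma G2:
  fixes a x c h d :: real and m :: int
  assumes a: "a > 0" and xc: "\<bar>x - c\<bar> < h" and xm: "\<bar>x - m / a\<bar> < d"
    and h: "2 * a * h \<le> 1" and d: "a * d \<le> 1/2"
  shows "m = \<lfloor>a * (c - h) - 1/2\<rfloor> + 1 \<or> m = \<lfloor>a * (c - h) - 1/2\<rfloor> + 2"
proof -
  let ?B = "a * (c - h) - 1/2"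
  have "\<bar>m / a - c\<bar> < h + d" using xc xm by linarith
  then have "c - h - d < m / a" "m / a < c + h + d" by linarith+
  then have l: "a * (c - h - d) < m" and u: "m < a * (c + h + d)" using a by (simp_all add: field_simps)
  have "?B < m" using l d by (simp add: algebra_simps)
  moreover have "m < ?B + 2" using u d h by (simp add: algebra_simps)
  ultimately have m1: "\<lfloor>?B\<rfloor> < m" and m2: "of_int m < ?B + 2" by (simp_all add: floor_less_iff)
  have "?B < of_int \<lfloor>?B\<rfloor> + 1" by (rule floor_correct[THEN conjunct2, unfolded of_int_add of_int_1])
  then have "(of_int m :: real) < of_int (\<lfloor>?B\<rfloor> + 3)" using m2 by linarith
  then have "m < \<lfloor>?B\<rfloor> + 3" by (simp only: of_int_less_iff)
  with m1 show ?thesis by linarith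
qed

lemma strip_Re: "\<bar>Re z - a\<bar> < \<delta> \<Longrightarrow> z \<in> tube \<i> (of_real a) \<delta>"
  unfolding tube_def
  by (rule CollectI, rule exI[of _ "Im z"]) (simp add: dist_norm cmod_def complex_eq_iff)

lemma strip_Im: "\<bar>Im z - b\<bar> < \<delta> \<Longrightarrow> z \<in> tube 1 (\<i> * of_real b) \<delta>"
  unfolding tube_def
  by (rule CollectI, rule exI[of _ "Re z"]) (simp add: dist_norm cmod_def complex_eq_iff)

lemma open_tube: "open (tube e x r)"
proof -
  have "tube e x r = (\<Union>s::real. ball (x + of_real s * e) r)"
    by (auto simp: tube_def dist_commute)
  then show ?thesis by auto
qed

lemma tube_pullback:
  fixes L c e x :: complex
  assumes L: "L \<noteq> 0" and e0: "e \<noteq> 0"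
  shows "(\<lambda>w. L * w + c) -` tube e x \<delta> \<subseteq> tube (e / L / of_real (norm (e / L))) ((x - c) / L) (\<delta> / norm L)"
proof
  fix w assume "w \<in> (\<lambda>w. L * w + c) -` tube e x \<delta>"
  then obtain s :: real where s: "dist (L * w + c) (x + of_real s * e) < \<delta>" by (auto simp: tube_def)
  show "w \<in> tube (e / L / of_real (norm (e / L))) ((x - c) / L) (\<delta> / norm L)"
  proof -
    let ?n = "norm (e / L)"
    have n: "?n > 0" using e0 L by simp
    have eq: "(L * w + c) - (x + of_real s * e) = L * (w - ((x - c) / L + of_real (s * ?n) * (e / L / of_real ?n)))"
      using L n by (simp add: field_simps)
    have "dist w ((x - c) / L + of_real (s * ?n) * (e / L / of_real ?n)) < \<delta> / norm L"
      using s L unfolding dist_norm eq norm_mult by (simp add: field_simps)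
    then show ?thesis unfolding tube_def by blast
  qed
qed

lemma norm_unit:
  fixes e L :: complex
  assumes "e \<noteq> 0" "L \<noteq> 0" shows "norm (e / L / of_real (norm (e / L))) = 1"
proof -
  have n: "norm (e / L) > 0" using assms by simp
  have "norm (e / L / of_real (norm (e / L))) = norm (e / L) / norm (of_real (norm (e / L)) :: complex)"
    by (rule norm_divide)
  also have "\<dots> = 1" using n by simp
  finally show ?thesis .
qed


context pm begin

lemma prod_lam_ne0: "(\<Prod>j<(m::nat). lam ((\<omega>::nat \<Rightarrow> 'i) j)) \<noteq> 0"
  by (subst prod_zero_iff) (use lam_pos in auto)

lemma norm_prod_lam: "norm (\<Prod>j<(m::nat). lam ((\<omega>::nat \<Rightarrow> 'i) j)) = (\<Prod>j<m. norm (lam (\<omega> j)))"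
  by (simp add: prod_norm)

lemma fword_ball:
  "fword lam t \<omega> u ` ball 0 R = ball (fword lam t \<omega> u 0) (R * (\<Prod>j<length u. norm (lam (\<omega> j))))"
proof -
  let ?L = "\<Prod>j<length u. lam (\<omega> j)"
  define c where "c = fword lam t \<omega> u 0"
  have L: "?L \<noteq> 0" by (rule prod_lam_ne0)
  have f: "fword lam t \<omega> u z = ?L * z + c" for z unfolding c_def by (rule fword_affine)
  show ?thesis unfolding c_def[symmetric]
  proof (rule set_eqI)
    fix w show "w \<in> fword lam t \<omega> u ` ball 0 R \<longleftrightarrow> w \<in> ball c (R * (\<Prod>j<length u. norm (lam (\<omega> j))))"
    proof
      assume "w \<in> fword lam t \<omega> u ` ball 0 R"
      then obtain z where zb: "z \<in> ball 0 R" and w0: "w = fword lam t \<omega> u z" by (rule imageE)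
      have z: "norm z < R" using zb by simp
      have w: "w = ?L * z + c" using w0 f by simp
      have "dist c w = norm ?L * norm z" unfolding w dist_norm by (simp add: norm_mult)
      also have "\<dots> < norm ?L * R" using z L by simp
      finally show "w \<in> ball c (R * (\<Prod>j<length u. norm (lam (\<omega> j))))"
        by (simp add: norm_prod_lam mult.commute)
    next
      assume "w \<in> ball c (R * (\<Prod>j<length u. norm (lam (\<omega> j))))"
      then have d: "norm (w - c) < norm ?L * R" by (simp add: dist_norm norm_prod_lam norm_minus_commute mult.commute)
      let ?z = "(w - c) / ?L"
      have "norm ?z < R" using d L by (simp add: norm_divide field_simps)
      moreover have "fword lam t \<omega> u ?z = w" unfolding f using L by simp
      ultimately show "w \<in> fword lam t \<omega> u ` ball 0 R" by (intro image_eqI[of w _ ?z]) auto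
    qed
  qed
qed

end

lemma measure_Un5_le:
  assumes "A \<in> sets M" "B \<in> sets M" "C \<in> sets M" "D \<in> sets M" "E \<in> sets M"
  shows "measure M (A \<union> B \<union> C \<union> D \<union> E) \<le> measure M A + measure M B + measure M C + measure M D + measure M E"
proof -
  have "measure M (A \<union> B \<union> C \<union> D \<union> E) \<le> measure M (A \<union> B \<union> C \<union> D) + measure M E"
    using assms by (intro measure_Un_le) auto
  moreover have "measure M (A \<union> B \<union> C \<union> D) \<le> measure M (A \<union> B \<union> C) + measure M D"
    using assms by (intro measure_Un_le) auto
  moreover have "measure M (A \<union> B \<union> C) \<le> measure M (A \<union> B) + measure M C"
    using assms by (intro measure_Un_le) auto
  moreover have "measure M (A \<union> B) \<le> measure M A + measure M B"
    using assms by (intro measure_Un_le) auto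
  ultimately show ?thesis by linarith
qed

context pm begin

lemma St_cross:
  assumes u: "u \<in> St \<omega> n k"
  shows "\<exists>y. dist y (fword lam t \<omega> u 0) < R * (\<Prod>j<n. norm (lam (\<omega> j))) \<and> idx k y \<noteq> idx k (fword lam t \<omega> u 0)"
proof -
  have len: "length u = n" using u by (auto simp: St_def words_def)
  have "\<not> fword lam t \<omega> u ` ball 0 R \<subseteq> dyadic k (fword lam t \<omega> u 0)" using u by (auto simp: St_def)
  then obtain y where y1: "y \<in> fword lam t \<omega> u ` ball 0 R" and y2: "y \<notin> dyadic k (fword lam t \<omega> u 0)" by blast
  have "dist (fword lam t \<omega> u 0) y < R * (\<Prod>j<n. norm (lam (\<omega> j)))"
    using y1 unfolding fword_ball len by simp
  moreover have "idx k y \<noteq> idx k (fword lam t \<omega> u 0)" using y2 by (simp add: dyadic_sq in_sq_iff)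
  ultimately show ?thesis by (auto simp: dist_commute)
qed

lemma cross_strip:
  fixes a r h :: real and cu c z y :: complex
  assumes a: "a > 0" and zu: "dist z cu < r" and yu: "dist y cu < r"
    and idx: "(\<lfloor>a * Re y\<rfloor>, \<lfloor>a * Im y\<rfloor>) \<noteq> (\<lfloor>a * Re cu\<rfloor>, \<lfloor>a * Im cu\<rfloor>)"
    and zc: "dist z c < h" and h: "2 * a * h \<le> 1" and ra: "a * (2 * r) \<le> 1/2"
  shows "(\<exists>i\<in>{1,2}. \<bar>Re z - of_int (\<lfloor>a * (Re c - h) - 1/2\<rfloor> + i) / a\<bar> < 2 * r) \<or>
         (\<exists>i\<in>{1,2}. \<bar>Im z - of_int (\<lfloor>a * (Im c - h) - 1/2\<rfloor> + i) / a\<bar> < 2 * r)"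
proof (cases "\<lfloor>a * Re y\<rfloor> \<noteq> \<lfloor>a * Re cu\<rfloor>")
  case True
  have "\<bar>Re cu - Re y\<bar> < r"
    using yu abs_Re_le_cmod[of "cu - y"] by (simp add: dist_norm norm_minus_commute)
  then obtain m :: int where m: "\<bar>Re cu - m / a\<bar> < r" using G1[OF a _ True[symmetric]] by blast
  have "\<bar>Re z - Re cu\<bar> < r" using zu abs_Re_le_cmod[of "z - cu"] by (simp add: dist_norm)
  then have zm: "\<bar>Re z - m / a\<bar> < 2 * r" using m by linarith
  have "\<bar>Re z - Re c\<bar> < h" using zc abs_Re_le_cmod[of "z - c"] by (simp add: dist_norm)
  from G2[OF a this zm h ra] have "m = \<lfloor>a * (Re c - h) - 1/2\<rfloor> + 1 \<or> m = \<lfloor>a * (Re c - h) - 1/2\<rfloor> + 2" .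
  then show ?thesis using zm by auto
next
  case False
  then have F: "\<lfloor>a * Im y\<rfloor> \<noteq> \<lfloor>a * Im cu\<rfloor>" using idx by auto
  have "\<bar>Im cu - Im y\<bar> < r"
    using yu abs_Im_le_cmod[of "cu - y"] by (simp add: dist_norm norm_minus_commute)
  then obtain m :: int where m: "\<bar>Im cu - m / a\<bar> < r" using G1[OF a _ F[symmetric]] by blast
  have "\<bar>Im z - Im cu\<bar> < r" using zu abs_Im_le_cmod[of "z - cu"] by (simp add: dist_norm)
  then have zm: "\<bar>Im z - m / a\<bar> < 2 * r" using m by linarith
  have "\<bar>Im z - Im c\<bar> < h" using zc abs_Im_le_cmod[of "z - c"] by (simp add: dist_norm)
  from G2[OF a this zm h ra] have "m = \<lfloor>a * (Im c - h) - 1/2\<rfloor> + 1 \<or> m = \<lfloor>a * (Im c - h) - 1/2\<rfloor> + 2" .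
  then show ?thesis using zm by auto
qed

end


context pm begin

lemma mu_X_bound:
  fixes K n k :: nat and C \<rho> :: real
  assumes Fr: "frostman_tubes (eta kk lam t p (shiftn K \<omega>)) C \<rho>"
    and hs: "2 * R * (\<Prod>j<K. norm (lam (\<omega> j))) \<le> 1 / 2^k"
    and hr: "4 * (R * (\<Prod>j<n. norm (lam (\<omega> j)))) \<le> 1 / 2^k"
    and v: "v \<in> words kk \<omega> K"
  shows "mu \<omega> K v (\<Union>u\<in>St \<omega> n k. fword lam t \<omega> u ` ball 0 R)
     \<le> 4 * (C * (2 * (R * (\<Prod>j<n. norm (lam (\<omega> j)))) / (\<Prod>j<K. norm (lam (\<omega> j)))) powr \<rho>)"
proof -
  define s where "s = (\<Prod>j<K. norm (lam (\<omega> j)))"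
  define r where "r = R * (\<Prod>j<n. norm (lam (\<omega> j)))"
  define a :: real where "a = 2 ^ k"
  define L where "L = (\<Prod>j<K. lam (\<omega> j))"
  define c where "c = fword lam t \<omega> v 0"
  define X where "X = (\<Union>u\<in>St \<omega> n k. fword lam t \<omega> u ` ball 0 R)"
  define \<delta> where "\<delta> = 2 * r"
  define m0 where "m0 = \<lfloor>a * (Re c - R * s) - 1/2\<rfloor>"
  define n0 where "n0 = \<lfloor>a * (Im c - R * s) - 1/2\<rfloor>"
  define T where "T = (\<lambda>e x. tube (e / L / of_real (norm (e / L))) ((x - c) / L) (\<delta> / norm L))"
  let ?\<eta> = "eta kk lam t p (shiftn K \<omega>)"
  have lenv: "length v = K" using v by (simp add: words_def)
  have L0: "L \<noteq> 0" unfolding L_def by (rule prod_lam_ne0)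
  have nL: "norm L = s" unfolding L_def s_def by (rule norm_prod_lam)
  have a: "a > 0" unfolding a_def by simp
  have spos: "s > 0" unfolding s_def using lam_pos by (intro prod_pos) auto
  have rpos: "r > 0" unfolding r_def using lam_pos R_pos by (intro mult_pos_pos prod_pos) auto
  have fv: "fword lam t \<omega> v w = L * w + c" for w
    unfolding c_def L_def using fword_affine[of \<omega> v w] by (simp add: lenv)
  have h: "2 * a * (R * s) \<le> 1" using hs a unfolding a_def s_def by (simp add: field_simps)
  have ra: "a * (2 * r) \<le> 1/2" using hr a unfolding a_def r_def by (simp add: field_simps)
  have incl: "fword lam t \<omega> v -` X \<subseteq> (UNIV - ball 0 R) \<union> T \<i> (of_real ((m0 + 1) / a)) \<union> T \<i> (of_real ((m0 + 2) / a))
       \<union> T 1 (\<i> * of_real ((n0 + 1) / a)) \<union> T 1 (\<i> * of_real ((n0 + 2) / a))"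
  proof
    fix w assume w: "w \<in> fword lam t \<omega> v -` X"
    show "w \<in> (UNIV - ball 0 R) \<union> T \<i> (of_real ((m0 + 1) / a)) \<union> T \<i> (of_real ((m0 + 2) / a))
       \<union> T 1 (\<i> * of_real ((n0 + 1) / a)) \<union> T 1 (\<i> * of_real ((n0 + 2) / a))"
    proof (cases "w \<in> ball 0 R")
      case False then show ?thesis by blast
    next
      case True
      define z where "z = L * w + c"
      have zX: "z \<in> X" using w unfolding z_def fv[symmetric] by simp
      then obtain u where u: "u \<in> St \<omega> n k" and zu0: "z \<in> fword lam t \<omega> u ` ball 0 R"
        unfolding X_def by blast
      have lenu: "length u = n" using u by (auto simp: St_def words_def)
      have zu: "dist z (fword lam t \<omega> u 0) < r"
        using zu0 unfolding fword_ball lenu r_def by (simp add: dist_commute)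
      obtain y where yu: "dist y (fword lam t \<omega> u 0) < r" and yidx: "idx k y \<noteq> idx k (fword lam t \<omega> u 0)"
        using St_cross[OF u] unfolding r_def by blast
      have zc: "dist z c < R * s"
      proof -
        have "dist z c = norm L * norm w" unfolding z_def dist_norm by (simp add: norm_mult)
        also have "\<dots> < s * R" using True spos unfolding nL by simp
        finally show ?thesis by (simp add: mult.commute)
      qed
      have idx': "(\<lfloor>a * Re y\<rfloor>, \<lfloor>a * Im y\<rfloor>) \<noteq> (\<lfloor>a * Re (fword lam t \<omega> u 0)\<rfloor>, \<lfloor>a * Im (fword lam t \<omega> u 0)\<rfloor>)"
        using yidx unfolding idx_def a_def .
      have pb: "(\<lambda>w. L * w + c) -` tube e x \<delta> \<subseteq> T e x" if "e \<noteq> 0" for e x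
        unfolding T_def by (rule tube_pullback[OF L0 that])
      from cross_strip[OF a zu yu idx' zc h ra]
      consider (re) i where "i \<in> {1::int, 2}" "\<bar>Re z - of_int (m0 + i) / a\<bar> < \<delta>"
        | (im) i where "i \<in> {1::int, 2}" "\<bar>Im z - of_int (n0 + i) / a\<bar> < \<delta>"
        unfolding m0_def n0_def \<delta>_def by blast
      then show ?thesis
      proof cases
        case re
        have "z \<in> tube \<i> (of_real (of_int (m0 + i) / a)) \<delta>" by (rule strip_Re[OF re(2)])
        then have "w \<in> T \<i> (of_real (of_int (m0 + i) / a))" using pb[of \<i>] unfolding z_def by auto
        then show ?thesis using re(1) by auto
      next
        case im
        have "z \<in> tube 1 (\<i> * of_real (of_int (n0 + i) / a)) \<delta>" by (rule strip_Im[OF im(2)])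
        then have "w \<in> T 1 (\<i> * of_real (of_int (n0 + i) / a))" using pb[of 1] unfolding z_def by auto
        then show ?thesis using im(1) by auto
      qed
    qed
  qed
  have Tm: "T e x \<in> sets borel" for e x unfolding T_def by (intro borel_open open_tube)
  have ub: "UNIV - ball 0 R \<in> sets borel"
    by (rule borel_closed) (simp add: Compl_eq_Diff_UNIV[symmetric] closed_Compl)
  have Tb: "measure ?\<eta> (T e x) \<le> C * (\<delta> / s) powr \<rho>" if "e \<noteq> 0" for e x
  proof -
    have "norm (e / L / of_real (norm (e / L))) = 1" by (rule norm_unit[OF that L0])
    moreover have "\<delta> / norm L > 0" using rpos spos nL unfolding \<delta>_def by simp
    ultimately show ?thesis using Fr unfolding frostman_tubes_def T_def nL by blast
  qed
  have "mu \<omega> K v X \<le> measure ?\<eta> ((UNIV - ball 0 R) \<union> T \<i> (of_real ((m0 + 1) / a)) \<union> T \<i> (of_real ((m0 + 2) / a))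
       \<union> T 1 (\<i> * of_real ((n0 + 1) / a)) \<union> T 1 (\<i> * of_real ((n0 + 2) / a)))"
    unfolding mu_def
    by (rule finite_measure.finite_measure_mono[OF prob_space.finite_measure[OF prob_eta] incl])
       (simp only: sets_eta, intro sets.Un Tm ub)
  also have "\<dots> \<le> measure ?\<eta> (UNIV - ball 0 R) + measure ?\<eta> (T \<i> (of_real ((m0 + 1) / a))) + measure ?\<eta> (T \<i> (of_real ((m0 + 2) / a)))
       + measure ?\<eta> (T 1 (\<i> * of_real ((n0 + 1) / a))) + measure ?\<eta> (T 1 (\<i> * of_real ((n0 + 2) / a)))"
    by (rule measure_Un5_le) (simp_all only: sets_eta Tm ub)
  also have "\<dots> \<le> 0 + C * (\<delta> / s) powr \<rho> + C * (\<delta> / s) powr \<rho> + C * (\<delta> / s) powr \<rho> + C * (\<delta> / s) powr \<rho>"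
    using Tb[of \<i>] Tb[of 1] measure_outside by (intro add_mono) auto
  finally show ?thesis unfolding X_def \<delta>_def r_def s_def by simp
qed

end


context pm begin

lemma measure_eta_ball: "measure (eta kk lam t p \<omega>) (ball 0 R) = 1"
  using eta_ball[of \<omega>] by (simp add: measure_def)

lemma nu_bound:
  fixes K n k :: nat and C \<rho> :: real
  assumes Fr: "frostman_tubes (eta kk lam t p (shiftn K \<omega>)) C \<rho>"
    and hs: "2 * R * (\<Prod>j<K. norm (lam (\<omega> j))) \<le> 1 / 2^k"
    and hr: "4 * (R * (\<Prod>j<n. norm (lam (\<omega> j)))) \<le> 1 / 2^k"
  shows "nu \<omega> n k UNIV \<le> 4 * (C * (2 * (R * (\<Prod>j<n. norm (lam (\<omega> j)))) / (\<Prod>j<K. norm (lam (\<omega> j)))) powr \<rho>)"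
proof -
  define B where "B = 4 * (C * (2 * (R * (\<Prod>j<n. norm (lam (\<omega> j)))) / (\<Prod>j<K. norm (lam (\<omega> j)))) powr \<rho>)"
  define X where "X = (\<Union>u\<in>St \<omega> n k. fword lam t \<omega> u ` ball 0 R)"
  have Xo: "open X" unfolding X_def fword_ball by (intro open_UN) auto
  then have Xb: "X \<in> sets borel" by simp
  have "nu \<omega> n k UNIV = (\<Sum>u\<in>St \<omega> n k. pword p \<omega> u)" unfolding nu_def by (simp add: mu_UNIV)
  also have "\<dots> \<le> (\<Sum>u\<in>St \<omega> n k. pword p \<omega> u * mu \<omega> n u X)"
  proof (rule sum_mono)
    fix u assume u: "u \<in> St \<omega> n k"
    then have pu: "pword p \<omega> u \<ge> 0" using St_sub[of \<omega> n k] by (blast intro: pword_nonneg)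
    have "ball 0 R \<subseteq> fword lam t \<omega> u -` X" unfolding X_def using u by blast
    then have "measure (eta kk lam t p (shiftn n \<omega>)) (ball 0 R) \<le> mu \<omega> n u X"
      unfolding mu_def
      by (rule finite_measure.finite_measure_mono[OF prob_space.finite_measure[OF prob_eta]])
         (simp add: fword_vimage Xb)
    then have "1 \<le> mu \<omega> n u X" by (simp add: measure_eta_ball)
    then show "pword p \<omega> u \<le> pword p \<omega> u * mu \<omega> n u X" using pu by (simp add: mult_le_cancel_left1)
  qed
  also have "\<dots> \<le> (\<Sum>u\<in>words kk \<omega> n. pword p \<omega> u * mu \<omega> n u X)"
    by (rule sum_mono2[OF finite_words St_sub]) (auto intro!: mult_nonneg_nonneg pword_nonneg mu_nonneg)
  also have "\<dots> = measure (eta kk lam t p \<omega>) X" by (rule eta_words_real[symmetric, OF Xb])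
  also have "\<dots> = (\<Sum>v\<in>words kk \<omega> K. pword p \<omega> v * mu \<omega> K v X)" by (rule eta_words_real[OF Xb])
  also have "\<dots> \<le> (\<Sum>v\<in>words kk \<omega> K. pword p \<omega> v * B)"
  proof (rule sum_mono)
    fix v assume v: "v \<in> words kk \<omega> K"
    show "pword p \<omega> v * mu \<omega> K v X \<le> pword p \<omega> v * B"
      unfolding B_def X_def by (rule mult_left_mono[OF mu_X_bound[OF Fr hs hr v] pword_nonneg[OF v]])
  qed
  also have "\<dots> = B" by (simp add: sum_distrib_right[symmetric] sum_pword)
  finally show ?thesis unfolding B_def .
qed

end

context pm begin

lemma prod_le_rmax: "(\<Prod>j\<in>A. norm (lam (\<omega> j))) \<le> rmax ^ card A"
proof -
  have "(\<Prod>j\<in>A. norm (lam (\<omega> j))) \<le> (\<Prod>j\<in>A. rmax)"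
    by (intro prod_mono) (auto simp: rmax_ge)
  then show ?thesis by simp
qed

lemma kprime_prop: "2 * R * (\<Prod>j<kprime lam R \<omega> k. norm (lam (\<omega> j))) \<le> 1 / 2^k"
proof -
  have "(\<lambda>m. 2 * R * rmax ^ m) \<longlonglongrightarrow> 2 * R * 0"
    by (intro tendsto_mult tendsto_const LIMSEQ_power_zero) (use rmax_lt1 rmax_pos in auto)
  moreover have "(0::real) < 1 / 2^k" by simp
  ultimately have "eventually (\<lambda>m. 2 * R * rmax ^ m < 1 / 2^k) sequentially"
    by (simp add: order_tendstoD)
  then obtain m where m: "2 * R * rmax ^ m < 1 / 2^k" by (auto simp: eventually_sequentially)
  have "2 * R * (\<Prod>j<m. norm (lam (\<omega> j))) \<le> 2 * R * rmax ^ m"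
    using prod_le_rmax[of \<omega> "{..<m}"] R_pos by simp
  then have "\<exists>k'. 2 * R * (\<Prod>j<k'. norm (lam (\<omega> j))) \<le> 1 / 2^k" using m by (intro exI[of _ m]) simp
  then show ?thesis unfolding kprime_def by (rule LeastI_ex)
qed

lemma prod_split: "(\<Prod>j<(K::nat) + N. norm (lam (\<omega> j))) = (\<Prod>j<K. norm (lam (\<omega> j))) * (\<Prod>j\<in>{K..<K+N}. norm (lam (\<omega> j)))"
proof -
  have "(\<Prod>j\<in>{0..<K}. norm (lam (\<omega> j))) * (\<Prod>j\<in>{K..<K+N}. norm (lam (\<omega> j))) = (\<Prod>j\<in>{0..<K+N}. norm (lam (\<omega> j)))"
    by (rule prod.atLeastLessThan_concat) auto
  then show ?thesis by (simp add: atLeast0LessThan)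
qed

lemma exists_N:
  assumes eps: "\<epsilon> > 0" and C: "C > 0" and rho: "\<rho> > 0"
  shows "\<exists>N::nat. rmax ^ N \<le> 1/2 \<and> 4 * (C * (2 * R * rmax ^ N) powr \<rho>) < \<epsilon> * \<epsilon>"
proof -
  have l0: "(\<lambda>N. rmax ^ N) \<longlonglongrightarrow> 0" by (rule LIMSEQ_power_zero) (use rmax_lt1 rmax_pos in auto)
  have "(\<lambda>N. 2 * R * rmax ^ N) \<longlonglongrightarrow> 2 * R * 0" by (intro tendsto_mult tendsto_const l0)
  then have "(\<lambda>N. (2 * R * rmax ^ N) powr \<rho>) \<longlonglongrightarrow> 0"
    by (intro tendsto_zero_powrI[where b=\<rho>]) (use rho R_pos rmax_pos in \<open>auto intro!: always_eventually\<close>)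
  then have l4: "(\<lambda>N. 4 * (C * (2 * R * rmax ^ N) powr \<rho>)) \<longlonglongrightarrow> 0"
    by (intro tendsto_mult_right_zero)
  have e1: "eventually (\<lambda>N. 4 * (C * (2 * R * rmax ^ N) powr \<rho>) < \<epsilon> * \<epsilon>) sequentially"
    using eps by (intro order_tendstoD(2)[OF l4]) auto
  have e2: "eventually (\<lambda>N. rmax ^ N < 1/2) sequentially"
    using l0 by (intro order_tendstoD) auto
  from eventually_conj[OF e1 e2] obtain N where "4 * (C * (2 * R * rmax ^ N) powr \<rho>) < \<epsilon> * \<epsilon>" "rmax ^ N < 1/2"
    by (auto simp: eventually_sequentially)
  then show ?thesis by (intro exI[of _ N]) auto
qed

end

context pm begin

lemma main_bound:
  fixes \<omega> :: "nat \<Rightarrow> 'i" and k N :: nat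
  assumes eps: "\<epsilon> > 0" and C: "C > 0" and rho: "\<rho> > 0"
    and N1: "rmax ^ N \<le> 1/2" and N2: "4 * (C * (2 * R * rmax ^ N) powr \<rho>) < \<epsilon> * \<epsilon>"
    and Fr: "frostman_tubes (eta kk lam t p (shiftn (kprime lam R \<omega> k) \<omega>)) C \<rho>"
  shows "measure (eta kk lam t p \<omega>)
      {x. tv_dist (raw_comp (eta kk lam t p \<omega>) k x) (trunc_comp kk lam t p R \<omega> (kprime lam R \<omega> k + N) k x) < \<epsilon>}
     > 1 - \<epsilon>"
proof -
  define K where "K = kprime lam R \<omega> k"
  define n where "n = K + N"
  let ?\<eta> = "eta kk lam t p \<omega>"
  interpret prob_space ?\<eta> by (rule prob_eta)
  define s where "s = (\<Prod>j<K. norm (lam (\<omega> j)))"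
  define P where "P = (\<Prod>j\<in>{K..<K+N}. norm (lam (\<omega> j)))"
  have spos: "s > 0" unfolding s_def using lam_pos by (intro prod_pos) auto
  have P0: "P \<ge> 0" unfolding P_def by (intro prod_nonneg) auto
  have PN: "P \<le> rmax ^ N" unfolding P_def using prod_le_rmax[of \<omega> "{K..<K+N}"] by simp
  have hs: "2 * R * s \<le> 1 / 2^k" unfolding s_def K_def by (rule kprime_prop)
  have pn: "(\<Prod>j<n. norm (lam (\<omega> j))) = s * P" unfolding n_def s_def P_def by (rule prod_split)
  have hr: "4 * (R * (\<Prod>j<n. norm (lam (\<omega> j)))) \<le> 1 / 2^k"
  proof -
    have "4 * (R * (\<Prod>j<n. norm (lam (\<omega> j)))) = 2 * (2 * R * s) * P" unfolding pn by simp
    also have "\<dots> \<le> 2 * (1 / 2^k) * (1/2)"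
      using hs N1 PN P0 R_pos spos by (intro mult_mono) auto
    also have "\<dots> = 1 / 2^k" by simp
    finally show ?thesis .
  qed
  have nuU: "nu \<omega> n k UNIV < \<epsilon> * \<epsilon>"
  proof -
    have "nu \<omega> n k UNIV \<le> 4 * (C * (2 * (R * (\<Prod>j<n. norm (lam (\<omega> j)))) / s) powr \<rho>)"
      unfolding s_def by (rule nu_bound[OF Fr[folded K_def] hs[unfolded s_def] hr])
    also have "2 * (R * (\<Prod>j<n. norm (lam (\<omega> j)))) / s = 2 * R * P" unfolding pn using spos by simp
    also have "4 * (C * (2 * R * P) powr \<rho>) \<le> 4 * (C * (2 * R * rmax ^ N) powr \<rho>)"
      using C rho R_pos P0 PN by (intro mult_left_mono powr_mono2) auto
    finally show ?thesis using N2 by simp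
  qed
  define Qb where "Qb = {q. \<epsilon> * measure ?\<eta> (sq k q) \<le> nu \<omega> n k (sq k q)}"
  define Bad where "Bad = (\<Union>q\<in>Qb. sq k q)"
  define Pg where "Pg = (\<lambda>q. tv_dist (uniform_measure ?\<eta> (sq k q)) (trunc_sq kk lam t p R \<omega> n (sq k q)) < \<epsilon>)"
  define G where "G = {x. tv_dist (raw_comp ?\<eta> k x) (trunc_comp kk lam t p R \<omega> n k x) < \<epsilon>}"
  have G_eq: "G = (\<Union>q\<in>{q. Pg q}. sq k q)"
    unfolding G_def Pg_def raw_comp_def trunc_comp_def dyadic_sq by (auto simp: in_sq_iff)
  have cnt: "countable X" for X :: "(int \<times> int) set" by (rule countable_subset[OF subset_UNIV]) simp
  have Gm: "G \<in> sets ?\<eta>" unfolding G_eq by (simp only: sets_eta) (rule sets.countable_UN''[OF cnt sq_borel])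
  have Bm: "Bad \<in> sets ?\<eta>" unfolding Bad_def by (simp only: sets_eta) (rule sets.countable_UN''[OF cnt sq_borel])
  have sub: "UNIV - Bad \<subseteq> G"
  proof
    fix x assume x: "x \<in> UNIV - Bad"
    define q where "q = idx k x"
    have xq: "x \<in> sq k q" unfolding q_def by (simp add: in_sq_iff)
    have "q \<notin> Qb" using x xq unfolding Bad_def by blast
    then have lt: "nu \<omega> n k (sq k q) < \<epsilon> * measure ?\<eta> (sq k q)" unfolding Qb_def by simp
    then have mpos: "measure ?\<eta> (sq k q) > 0" using nu_nonneg[of \<omega> n k "sq k q"] eps
      by (metis less_le_trans mult_pos_pos not_less zero_less_mult_pos)
    have "tv_dist (uniform_measure ?\<eta> (sq k q)) (trunc_sq kk lam t p R \<omega> n (sq k q))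
        \<le> (\<Sum>u\<in>words kk \<omega> n - Sset \<omega> n (sq k q). pword p \<omega> u * mu \<omega> n u (sq k q)) / measure ?\<eta> (sq k q)"
      by (rule tv_square[OF sq_borel mpos])
    also have "\<dots> \<le> nu \<omega> n k (sq k q) / measure ?\<eta> (sq k q)"
      by (rule divide_right_mono[OF e_le_nu less_imp_le[OF mpos]])
    also have "\<dots> < \<epsilon>" using lt mpos by (simp add: divide_less_eq)
    finally have "Pg q" unfolding Pg_def .
    then show "x \<in> G" unfolding G_eq using xq by blast
  qed
  have "\<epsilon> * measure ?\<eta> Bad \<le> nu \<omega> n k UNIV" unfolding Bad_def Qb_def by (rule bad_bound[OF eps])
  then have "\<epsilon> * measure ?\<eta> Bad < \<epsilon> * \<epsilon>" using nuU by simp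
  then have Bl: "measure ?\<eta> Bad < \<epsilon>" using eps by simp
  have "measure ?\<eta> (UNIV - Bad) \<le> measure ?\<eta> G"
    by (rule finite_measure_mono[OF sub Gm])
  moreover have "measure ?\<eta> (UNIV - Bad) = 1 - measure ?\<eta> Bad"
    using prob_compl[OF Bm] by simp
  ultimately have "measure ?\<eta> G > 1 - \<epsilon>" using Bl by linarith
  then show ?thesis unfolding G_def n_def K_def .
qed

end

theorem lemma3p14:
  fixes kk :: "'i::finite \<Rightarrow> nat" and lam :: "'i \<Rightarrow> complex"
    and t :: "'i \<Rightarrow> nat \<Rightarrow> complex" and p :: "'i \<Rightarrow> nat \<Rightarrow> real" and R :: real
  assumes "planar_model kk lam t p R"
  shows "\<forall>\<epsilon>>0. \<forall>C>0. \<forall>\<rho>>0. \<exists>N::nat. \<forall>(\<omega>::nat \<Rightarrow> 'i) (k::nat).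
           frostman_tubes (eta kk lam t p (shiftn (kprime lam R \<omega> k) \<omega>)) C \<rho> \<longrightarrow>
           (let n = kprime lam R \<omega> k + N
            in measure (eta kk lam t p \<omega>)
                 {x. tv_dist (raw_comp (eta kk lam t p \<omega>) k x) (trunc_comp kk lam t p R \<omega> n k x) < \<epsilon>}
               > 1 - \<epsilon>)"
proof -
  interpret pm kk lam t p R by (rule pm.intro[OF assms])
  show ?thesis
  proof (intro allI impI)
    fix \<epsilon> C \<rho> :: real
    assume eps: "\<epsilon> > 0" and C: "C > 0" and rho: "\<rho> > 0"
    obtain N where N1: "rmax ^ N \<le> 1/2" and N2: "4 * (C * (2 * R * rmax ^ N) powr \<rho>) < \<epsilon> * \<epsilon>"
      using exists_N[OF eps C rho] by blast
    show "\<exists>N::nat. \<forall>(\<omega>::nat \<Rightarrow> 'i) (k::nat).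
           frostman_tubes (eta kk lam t p (shiftn (kprime lam R \<omega> k) \<omega>)) C \<rho> \<longrightarrow>
           (let n = kprime lam R \<omega> k + N
            in measure (eta kk lam t p \<omega>)
                 {x. tv_dist (raw_comp (eta kk lam t p \<omega>) k x) (trunc_comp kk lam t p R \<omega> n k x) < \<epsilon>}
               > 1 - \<epsilon>)"
    proof (intro exI[of _ N] allI impI)
      fix \<omega> :: "nat \<Rightarrow> 'i" and k :: nat
      assume Fr: "frostman_tubes (eta kk lam t p (shiftn (kprime lam R \<omega> k) \<omega>)) C \<rho>"
      show "let n = kprime lam R \<omega> k + N
            in measure (eta kk lam t p \<omega>)
                 {x. tv_dist (raw_comp (eta kk lam t p \<omega>) k x) (trunc_comp kk lam t p R \<omega> n k x) < \<epsilon>}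
               > 1 - \<epsilon>"
        unfolding Let_def by (rule main_bound[OF eps C rho N1 N2 Fr])
    qed
  qed
qed

end
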